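(* Let $p$ be an odd prime, $m\ge1$, $1\le s\le m-4$ with $m+s$ even, and $f\in\mathit{WRPB}$ an $s$-plateaued function $\mathbb{F}_{p^m}\to\mathbb{F}_p$ with sign $\epsilon$. Let $D_0=\{x\in\mathbb{F}_{p^m}^\star: f(x)=0\}$ and $\epsilon_0=\epsilon\,\eta_0^{(m+s)/2}(-1)$. Then $\mathcal{C}_{D_0}$ is a minimal code over $\mathbb{F}_p$ with parameters $[p^{m-1}-1,m,(p-1)(p^{m-2}-(p-1)\sqrt p^{\,m+s-4})]$ if $\epsilon_0=1$, and $[p^{m-1}-1,m,(p-1)(p^{m-2}-\sqrt p^{\,m+s-4})]$ otherwise.
   Context: $p$ is an odd prime, $\mathrm{Tr}^m$ is the trace from $\mathbb{F}_{p^m}$ to $\mathbb{F}_p$, $\zeta_p=e^{2\pi i/p}$, $\eta_0$ the quadratic character of $\mathbb{F}_p^\star$, $\eta_0^k(-1)=(\eta_0(-1))^k$, $p^*=\eta_0(-1)p$, $\sqrt{p^*}$ is $\sqrt p$ if $p\equiv1\pmod4$ and $i\sqrt p$ if $p\equiv3\pmod4$, $\sqrt p^{\,k}=(\sqrt p)^k$. For $f:\mathbb{F}_{p^m}\to\mathbb{F}_p$, $W_f(\omega)=\sum_x\zeta_p^{f(x)-\mathrm{Tr}^m(\omega x)}$; balanced means $W_f(0)=0$; $s$-plateaued means $|W_f(\omega)|^2\in\{0,p^{m+s}\}$ for all $\omega$, with $S_f=\{\omega:|W_f(\omega)|^2=p^{m+s}\}$; weakly regular means there are $u\in\{\pm1,\pm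 i\}$ independent of $\omega$ and $f^\star$ vanishing off $S_f$ with $W_f(\omega)\in\{0,u p^{(m+s)/2}\zeta_p^{f^\star(\omega)}\}$ for all $\omega$, and then there is a sign $\epsilon\in\{\pm1\}$ (the sign of $f$) with $W_f(\omega)=\epsilon\sqrt{p^*}^{\,m+s}\zeta_p^{f^\star(\omega)}$ on $S_f$. $\mathit{WRPB}$: weakly regular $s$-plateaued balanced $f$ with $f(0)=0$ and $f(ax)=a^tf(x)$ for all $a\in\mathbb{F}_p^\star$, $x$, for some positive even $t$ with $\gcd(t-1,p-1)=1$. For $D=\{d_1,\dots,d_n\}$, $\mathcal{C}_D=\{(\mathrm{Tr}^m(\omega d_1),\dots,\mathrm{Tr}^m(\omega d_n)):\omega\in\mathbb{F}_{p^m}\}$. $[n,k,d]$: length, dimension, minimum Hamming distance. A codeword $u$ covers $v$ if $\mathrm{supp}(v)\subseteq\mathrm{supp}(u)$; a linear code is minimal if each nonzero codeword $u$ covers only the codewords $iu$, $i\in\mathbb{F}_p$. *)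

theory Defs
  imports "HOL-Analysis.Analysis"
begin

text \<open>The field F_{p^m} is a finite field type 'a with CHAR('a) = p and
CARD('a) = p^m.  Elements of the prime field F_p are represented by natural numbers
0..p-1 (arithmetic mod p).  Functions f : F_{p^m} -> F_p are maps 'a => nat with values < p.\<close>

definition trace_elem :: "nat \<Rightarrow> nat \<Rightarrow> 'a::field \<Rightarrow> 'a" where
  "trace_elem p m x = (\<Sum>i<m. x ^ (p ^ i))"

definition Tr :: "nat \<Rightarrow> nat \<Rightarrow> 'a::field \<Rightarrow> nat" where
  "Tr p m x = (THE k. k < p \<and> of_nat k = trace_elem p m x)"

definition zeta :: "nat \<Rightarrow> complex" where
  "zeta p = cis (2 * pi / real p)"

definition walsh :: "nat \<Rightarrow> nat \<Rightarrow> ('a::{field,finite} \<Rightarrow> nat) \<Rightarrow> 'a \<Rightarrow> complex" where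
  "walsh p m f \<omega> = (\<Sum>x\<in>UNIV. zeta p powi (int (f x) - int (Tr p m (\<omega> * x))))"

definition balanced :: "nat \<Rightarrow> nat \<Rightarrow> ('a::{field,finite} \<Rightarrow> nat) \<Rightarrow> bool" where
  "balanced p m f \<longleftrightarrow> walsh p m f 0 = 0"

definition plateaued :: "nat \<Rightarrow> nat \<Rightarrow> nat \<Rightarrow> ('a::{field,finite} \<Rightarrow> nat) \<Rightarrow> bool" where
  "plateaued p m s f \<longleftrightarrow>
     (\<forall>\<omega>. (cmod (walsh p m f \<omega>))\<^sup>2 \<in> {0, real p ^ (m + s)})"

definition support_walsh :: "nat \<Rightarrow> nat \<Rightarrow> nat \<Rightarrow> ('a::{field,finite} \<Rightarrow> nat) \<Rightarrow> 'a set" where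
  "support_walsh p m s f = {\<omega>. (cmod (walsh p m f \<omega>))\<^sup>2 = real p ^ (m + s)}"

definition weakly_regular :: "nat \<Rightarrow> nat \<Rightarrow> nat \<Rightarrow> ('a::{field,finite} \<Rightarrow> nat) \<Rightarrow> bool" where
  "weakly_regular p m s f \<longleftrightarrow>
     (\<exists>u::complex. \<exists>fstar::'a \<Rightarrow> nat.
        u \<in> {1, -1, \<i>, -\<i>} \<and>
        (\<forall>\<omega>. fstar \<omega> < p) \<and>
        (\<forall>\<omega>. \<omega> \<notin> support_walsh p m s f \<longrightarrow> fstar \<omega> = 0) \<and>
        (\<forall>\<omega>. walsh p m f \<omega> \<in>
              {0, u * complex_of_real (sqrt (real p) ^ (m + s)) * zeta p ^ fstar \<omega>}))"

definition eta0_minus1 :: "nat \<Rightarrow> int" where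
  "eta0_minus1 p = (if p mod 4 = 1 then 1 else -1)"

definition sqrt_pstar :: "nat \<Rightarrow> complex" where
  "sqrt_pstar p = (if p mod 4 = 1 then complex_of_real (sqrt (real p))
                   else \<i> * complex_of_real (sqrt (real p)))"

definition has_sign :: "nat \<Rightarrow> nat \<Rightarrow> nat \<Rightarrow> ('a::{field,finite} \<Rightarrow> nat) \<Rightarrow> int \<Rightarrow> bool" where
  "has_sign p m s f \<epsilon> \<longleftrightarrow> \<epsilon> \<in> {1, -1} \<and>
     (\<exists>fstar::'a \<Rightarrow> nat. (\<forall>\<omega>. fstar \<omega> < p) \<and>
        (\<forall>\<omega>. \<omega> \<notin> support_walsh p m s f \<longrightarrow> fstar \<omega> = 0) \<and>
        (\<forall>\<omega>\<in>support_walsh p m s f.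
           walsh p m f \<omega> = of_int \<epsilon> * sqrt_pstar p ^ (m + s) * zeta p ^ fstar \<omega>))"

definition WRPB :: "nat \<Rightarrow> nat \<Rightarrow> nat \<Rightarrow> ('a::{field,finite} \<Rightarrow> nat) \<Rightarrow> bool" where
  "WRPB p m s f \<longleftrightarrow>
     (\<forall>x. f x < p) \<and>
     weakly_regular p m s f \<and> plateaued p m s f \<and> balanced p m f \<and> f 0 = 0 \<and>
     (\<exists>t::nat. t > 0 \<and> even t \<and> gcd (t - 1) (p - 1) = 1 \<and>
        (\<forall>a\<in>{1..<p}. \<forall>x. f (of_nat a * x) = (a ^ t * f x) mod p))"

text \<open>Codes: a codeword of length n = card D is a function D -> F_p (restricted to D).\<close>
definition code_D :: "nat \<Rightarrow> nat \<Rightarrow> 'a::field set \<Rightarrow> ('a \<Rightarrow> nat) set" where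
  "code_D p m D = (\<lambda>\<omega>. restrict (\<lambda>d. Tr p m (\<omega> * d)) D) ` UNIV"

definition cw_supp :: "'a set \<Rightarrow> ('a \<Rightarrow> nat) \<Rightarrow> 'a set" where
  "cw_supp D u = {d\<in>D. u d \<noteq> 0}"

definition hamming_dist :: "'a set \<Rightarrow> ('a \<Rightarrow> nat) \<Rightarrow> ('a \<Rightarrow> nat) \<Rightarrow> nat" where
  "hamming_dist D u v = card {d\<in>D. u d \<noteq> v d}"

definition min_distance :: "'a set \<Rightarrow> ('a \<Rightarrow> nat) set \<Rightarrow> nat" where
  "min_distance D C = Min {hamming_dist D u v | u v. u \<in> C \<and> v \<in> C \<and> u \<noteq> v}"

definition code_params :: "nat \<Rightarrow> 'a set \<Rightarrow> ('a \<Rightarrow> nat) set \<Rightarrow> nat \<Rightarrow> nat \<Rightarrow> nat \<Rightarrow> bool" where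
  "code_params p D C n k d \<longleftrightarrow> card D = n \<and> card C = p ^ k \<and> min_distance D C = d"

definition minimal_code :: "nat \<Rightarrow> 'a set \<Rightarrow> ('a \<Rightarrow> nat) set \<Rightarrow> bool" where
  "minimal_code p D C \<longleftrightarrow>
     (\<forall>u\<in>C. u \<noteq> restrict (\<lambda>_. 0) D \<longrightarrow>
        (\<forall>v\<in>C. cw_supp D v \<subseteq> cw_supp D u \<longrightarrow>
           (\<exists>i<p. v = restrict (\<lambda>d. (i * u d) mod p) D)))"

end

theory Submission
  imports Defs "HOL-Computational_Algebra.Computational_Algebra" "HOL-Library.Real_Mod"
begin


definition cyc :: "nat \<Rightarrow> int poly" where
  "cyc p = (\<Sum>k<p. monom 1 k)"

lemma cyc_times: "(\<Sum>k<n. monom (1::int) k) * [:-1,1:] = monom 1 n - 1"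
proof (induction n)
  case 0 then show ?case by simp
next
  case (Suc n)
  have "monom (1::int) n * [:-1,1:] = monom 1 (Suc n) - monom 1 n"
    by (simp add: monom_Suc algebra_simps flip: pCons_one)
  then show ?case using Suc by (simp add: algebra_simps)
qed

lemma eisenstein_aux:
  fixes G H :: "int poly" and p :: int
  assumes pr: "prime p" and E: "G * H = E" and n: "degree E = n"
    and dv: "\<And>i. i < n \<Longrightarrow> p dvd coeff E i"
    and nd0: "\<not> p^2 dvd coeff E 0" and ndn: "\<not> p dvd coeff E n"
    and pg: "p dvd coeff G 0" and ph: "\<not> p dvd coeff H 0"
  shows "degree H = 0"
proof (rule ccontr)
  assume "degree H \<noteq> 0"
  have Hnz: "H \<noteq> 0" using ph by auto
  have Gnz: "G \<noteq> 0" using pg E ndn by (metis coeff_0 dvd_0_right mult_zero_left)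
  have dsum: "degree G + degree H = n" using E n Gnz Hnz by (metis degree_mult_eq)
  hence lt: "degree G < n" using \<open>degree H \<noteq> 0\<close> by linarith
  have all: "\<forall>i\<le>j. p dvd coeff G i" if "j \<le> degree G" for j
    using that
  proof (induction j)
    case 0 then show ?case using pg by simp
  next
    case (Suc j)
    have IH: "\<forall>i\<le>j. p dvd coeff G i" using Suc by simp
    have "coeff E (Suc j) = (\<Sum>i\<le>Suc j. coeff G i * coeff H (Suc j - i))"
      unfolding E[symmetric] by (rule coeff_mult)
    also have "\<dots> = (\<Sum>i\<le>j. coeff G i * coeff H (Suc j - i)) + coeff G (Suc j) * coeff H 0"
      by simp
    finally have eq: "coeff G (Suc j) * coeff H 0 = coeff E (Suc j) - (\<Sum>i\<le>j. coeff G i * coeff H (Suc j - i))"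
      by simp
    have "p dvd coeff E (Suc j)" using dv Suc.prems lt by simp
    moreover have "p dvd (\<Sum>i\<le>j. coeff G i * coeff H (Suc j - i))"
      using IH by (intro dvd_sum) auto
    ultimately have "p dvd coeff G (Suc j) * coeff H 0" unfolding eq by (rule dvd_diff)
    hence "p dvd coeff G (Suc j)" using ph pr prime_dvd_mult_iff by blast
    then show ?case using IH le_Suc_eq by auto
  qed
  have "p dvd coeff G (degree G)" using all[of "degree G"] by simp
  moreover have "coeff E n = coeff G (degree G) * coeff H (degree H)"
    using E n dsum by (metis coeff_mult_degree_sum)
  ultimately show False using ndn by simp
qed

lemma eisenstein:
  fixes G H :: "int poly" and p :: int
  assumes pr: "prime p" and E: "G * H = E" and n: "degree E = n"
    and dv: "\<And>i. i < n \<Longrightarrow> p dvd coeff E i"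
    and nd0: "\<not> p^2 dvd coeff E 0" and ndn: "\<not> p dvd coeff E n"
  shows "degree G = 0 \<or> degree H = 0"
proof -
  have Gnz: "G \<noteq> 0" and Hnz: "H \<noteq> 0" using E ndn by (metis coeff_0 dvd_0_right mult_zero_left mult_zero_right)+
  have dsum: "degree G + degree H = n" using E n Gnz Hnz by (metis degree_mult_eq)
  have c0: "coeff E 0 = coeff G 0 * coeff H 0" unfolding E[symmetric] by (simp add: coeff_mult)
  show ?thesis
  proof (cases "n = 0")
    case True
    then show ?thesis using dsum by simp
  next
    case False
  have "p dvd coeff E 0" using dv False by simp
  hence "p dvd coeff G 0 \<or> p dvd coeff H 0" using c0 pr prime_dvd_mult_iff by metis
  moreover have "\<not> (p dvd coeff G 0 \<and> p dvd coeff H 0)"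
  proof
    assume "p dvd coeff G 0 \<and> p dvd coeff H 0"
    hence "p * p dvd coeff E 0" using c0 by (simp add: mult_dvd_mono)
    thus False using nd0 by (simp add: power2_eq_square)
  qed
  ultimately consider "p dvd coeff G 0" "\<not> p dvd coeff H 0" | "p dvd coeff H 0" "\<not> p dvd coeff G 0"
    by blast
  then show ?thesis
  proof cases
    case 1
    have "degree H = 0" by (rule eisenstein_aux[OF pr E n dv nd0 ndn 1]) auto
    then show ?thesis by simp
  next
    case 2
    have E': "H * G = E" using E by (simp add: mult.commute)
    have "degree G = 0" by (rule eisenstein_aux[OF pr E' n dv nd0 ndn 2]) auto
    then show ?thesis by simp
  qed
  qed
qed


abbreviation ev :: "int poly \<Rightarrow> complex \<Rightarrow> complex" where
  "ev A z \<equiv> poly (map_poly of_int A) z"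

lemma mp_add: "map_poly (of_int :: int \<Rightarrow> 'b::comm_ring_1) (A + B) = map_poly of_int A + map_poly of_int B"
  by (intro poly_eqI) (simp add: coeff_map_poly)

lemma mp_diff: "map_poly (of_int :: int \<Rightarrow> 'b::comm_ring_1) (A - B) = map_poly of_int A - map_poly of_int B"
  by (intro poly_eqI) (simp add: coeff_map_poly)

lemma mp_smult: "map_poly (of_int :: int \<Rightarrow> 'b::comm_ring_1) (smult c A) = smult (of_int c) (map_poly of_int A)"
  by (intro poly_eqI) (simp add: coeff_map_poly)

lemma mp_pCons: "map_poly (of_int :: int \<Rightarrow> 'b::comm_ring_1) (pCons c A) = pCons (of_int c) (map_poly of_int A)"
  by (rule map_poly_pCons) simp

lemma ev_mult: "ev (A * B) z = ev A z * ev B z"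
proof (induction A)
  case 0 then show ?case by simp
next
  case (pCons a A)
  show ?case using pCons(2)
    by (simp add: mp_add mp_smult mp_pCons algebra_simps)
qed

lemma ev_smult: "ev (smult c A) z = of_int c * ev A z"
  by (simp add: mp_smult)

lemma ev_add: "ev (A + B) z = ev A z + ev B z"
  by (simp add: mp_add)

lemma ev_diff: "ev (A - B) z = ev A z - ev B z"
  by (simp add: mp_diff)

lemma ev_sum: "ev (\<Sum>k\<in>S. F k) z = (\<Sum>k\<in>S. ev (F k) z)"
  by (induction S rule: infinite_finite_induct) (auto simp: ev_add)

lemma ev_monom: "ev (monom c k) z = of_int c * z ^ k"
  by (simp add: map_poly_monom poly_monom)

lemma geom_int: "(\<Sum>k<n. (x+1) ^ k * x) = (x + 1) ^ n - (1::'b::comm_ring_1)"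
  by (induction n) (simp_all add: algebra_simps)

lemma cyc_shift_times_x:
  "pcompose (cyc p) [:1,1:] * [:0,1:] = [:1,1:] ^ p - 1"
proof (rule poly_ext)
  fix x :: int
  have "poly (pcompose (cyc p) [:1,1:] * [:0,1:]) x = (\<Sum>k<p. (x+1) ^ k * x)"
    by (simp add: poly_pcompose cyc_def poly_sum poly_monom sum_distrib_right sum_distrib_left algebra_simps)
  also have "\<dots> = (x+1)^p - 1" by (rule geom_int)
  finally show "poly (pcompose (cyc p) [:1,1:] * [:0,1:]) x = poly ([:1,1:] ^ p - 1) x"
    by (simp add: poly_power algebra_simps)
qed

lemma coeff_cyc_shift:
  "coeff (pcompose (cyc p) [:1,1:]) i = int (p choose (Suc i))"
proof -
  let ?E = "pcompose (cyc p) [:1,1:]"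
  have "coeff ?E i = coeff (?E * [:0,1:]) (Suc i)"
    by simp
  also have "\<dots> = coeff ([:1,1:] ^ p) (Suc i)"
    by (simp only: cyc_shift_times_x) simp
  also have "\<dots> = int (p choose (Suc i))"
  proof (cases "Suc i \<le> p")
    case True then show ?thesis by (simp add: coeff_linear_poly_power)
  next
    case False
    have "degree ([:1,1:] ^ p :: int poly) \<le> p"
      using degree_power_le[of "[:1,1:]::int poly" p] by simp
    then show ?thesis using False by (simp add: coeff_eq_0)
  qed
  finally show ?thesis .
qed

lemma cyc_irred:
  assumes pr: "prime p" and GH: "cyc p = G * H"
  shows "degree G = 0 \<or> degree H = 0"
proof -
  let ?q = "[:1,1:] :: int poly"
  let ?E = "pcompose (cyc p) ?q"
  have p1: "p > 1" using pr prime_gt_1_nat by blast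
  have E: "pcompose G ?q * pcompose H ?q = ?E" using GH by (simp add: pcompose_mult)
  have cE: "coeff ?E i = int (p choose (Suc i))" for i by (rule coeff_cyc_shift)
  have dE: "degree ?E = p - 1"
  proof (rule antisym)
    show "degree ?E \<le> p - 1" by (rule degree_le) (auto simp: cE)
    show "p - 1 \<le> degree ?E" by (rule le_degree) (use p1 in \<open>simp add: cE\<close>)
  qed
  have "degree (pcompose G ?q) = 0 \<or> degree (pcompose H ?q) = 0"
  proof (rule eisenstein[OF _ E dE])
    show "prime (int p)" using pr by simp
    show "int p dvd coeff ?E i" if "i < p - 1" for i
    proof -
      have "p dvd (p choose Suc i)" by (rule dvd_choose_prime) (use that p1 pr in auto)
      then show ?thesis by (simp add: cE)
    qed
    show "\<not> (int p)^2 dvd coeff ?E 0"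
    proof
      assume a: "(int p)^2 dvd coeff ?E 0"
      have "coeff ?E 0 = int p" by (simp only: cE) simp
      hence "int p * int p dvd int p * 1" using a by (simp add: power2_eq_square)
      hence "int p dvd 1" using p1 by (metis dvd_mult_cancel_left of_nat_eq_0_iff not_one_less_zero zero_less_iff_neq_zero)
      thus False using p1 by simp
    qed
    show "\<not> int p dvd coeff ?E (p - 1)" using p1 by (simp add: cE)
  qed
  then show ?thesis by (simp add: degree_pcompose)
qed


lemma zeta_pow_p: assumes "p > 0" shows "zeta p ^ p = 1"
proof -
  have "zeta p ^ p = cis (real p * (2*pi/real p))" unfolding zeta_def by (rule Complex.DeMoivre)
  also have "\<dots> = 1" using assms by simp
  finally show ?thesis .
qed

lemma geom_gen: "((z::complex) - 1) * (\<Sum>k<n. z ^ k) = z ^ n - 1"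
  by (induction n) (simp_all add: algebra_simps)

lemma zeta_nz: "zeta p \<noteq> 0"
  unfolding zeta_def by (metis cis_neq_zero)

lemma zeta_ne1: assumes "p > 1" shows "zeta p \<noteq> 1"
proof
  assume "zeta p = 1"
  then obtain n :: int where n: "2 * pi / real p = of_int n * (2 * pi)"
    unfolding zeta_def cis_eq_1_iff by blast
  have "1 / real p = (2 * pi / real p) / (2 * pi)" by simp
  also have "\<dots> = of_int n" using n by simp
  finally have "1 / real p = of_int n" .
  hence "1 = real_of_int n * real p" using assms by (simp add: field_simps)
  hence "1 = n * int p" by (metis of_int_1 of_int_eq_iff of_int_mult of_int_of_nat_eq)
  hence "int p dvd 1" by (metis dvd_triv_right)
  thus False using assms by simp
qed

lemma ev_cyc: assumes "p > 1" shows "ev (cyc p) (zeta p) = 0"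
proof -
  let ?z = "zeta p"
  have "ev (cyc p) ?z = (\<Sum>k<p. ?z ^ k)" by (simp add: cyc_def ev_sum ev_monom)
  moreover have "(?z - 1) * (\<Sum>k<p. ?z ^ k) = ?z ^ p - 1"
    by (rule geom_gen)
  ultimately show ?thesis using zeta_pow_p[of p] zeta_ne1[OF assms] assms by simp
qed

lemma coeff_cyc: "coeff (cyc p) i = (if i < p then 1 else 0)"
  by (simp add: cyc_def coeff_sum)

lemma degree_cyc: "p > 0 \<Longrightarrow> degree (cyc p) = p - 1"
proof (rule antisym)
  assume "p > 0"
  show "degree (cyc p) \<le> p - 1" by (rule degree_le) (auto simp: coeff_cyc)
  show "p - 1 \<le> degree (cyc p)" by (rule le_degree) (use \<open>p > 0\<close> in \<open>simp add: coeff_cyc\<close>)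
qed

lemma min_deg:
  assumes pr: "prime p" and A: "A \<noteq> 0" "ev A (zeta p) = 0"
  shows "degree A \<ge> p - 1"
proof (rule ccontr)
  assume "\<not> degree A \<ge> p - 1"
  hence dA: "degree A < p - 1" by simp
  have p1: "p > 1" using pr prime_gt_1_nat by blast
  let ?z = "zeta p"
  let ?P = "\<lambda>C. C \<noteq> 0 \<and> ev C ?z = 0"
  obtain B where B: "?P B" and minB: "\<And>C. ?P C \<Longrightarrow> degree B \<le> degree C"
    using ex_has_least_nat[of ?P A degree] A by blast
  have dB: "degree B < p - 1" using minB[of A] A dA by simp
  define P where "P = primitive_part B"
  have Bdec: "B = smult (content B) P" unfolding P_def by simp
  have cB: "content B \<noteq> 0" using B by simp
  have Pnz: "P \<noteq> 0" using B P_def by simp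
  have "ev B ?z = of_int (content B) * ev P ?z" by (metis Bdec ev_smult)
  hence evP: "ev P ?z = 0" using B cB by simp
  have dP: "degree P = degree B" unfolding P_def by simp
  have cP: "content P = 1" unfolding P_def using B by simp
  obtain q r where qr: "pseudo_divmod (cyc p) P = (q, r)" by (cases "pseudo_divmod (cyc p) P")
  define c where "c = coeff P (degree P) ^ (Suc (degree (cyc p)) - degree P)"
  have eq: "smult c (cyc p) = P * q + r" and rdeg: "r = 0 \<or> degree r < degree P"
    using pseudo_divmod[OF Pnz qr] unfolding c_def by auto
  have cnz: "c \<noteq> 0" unfolding c_def using Pnz by simp
  have "ev r ?z = ev (smult c (cyc p)) ?z - ev (P * q) ?z" by (simp add: eq ev_add)
  hence evr: "ev r ?z = 0" by (simp add: ev_smult ev_mult ev_cyc[OF p1] evP)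
  have r0: "r = 0"
  proof (rule ccontr)
    assume "r \<noteq> 0"
    hence "degree B \<le> degree r" using minB evr by blast
    thus False using rdeg \<open>r \<noteq> 0\<close> dP by simp
  qed
  have eq2: "smult c (cyc p) = P * q" using eq r0 by simp
  have ccyc: "content (cyc p) = 1"
  proof -
    have "content (cyc p) dvd coeff (cyc p) 0" by (rule content_dvd_coeff)
    hence "content (cyc p) dvd 1" using p1 by (simp add: coeff_cyc)
    thus ?thesis using is_unit_content_iff by blast
  qed
  have "primitive_part (smult c (cyc p)) = primitive_part (P * q)" using eq2 by simp
  hence "smult (unit_factor c) (cyc p) = P * primitive_part q"
    by (simp add: primitive_part_smult primitive_part_mult primitive_part_prim ccyc cP)
  hence "smult (unit_factor c) (smult (unit_factor c) (cyc p)) = P * smult (unit_factor c) (primitive_part q)"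
    by (metis mult_smult_right)
  moreover have "unit_factor c * unit_factor c = 1" using cnz
    by (simp add: unit_factor_int_def sgn_if)
  ultimately have fac: "cyc p = P * smult (unit_factor c) (primitive_part q)"
    by (simp add: smult_smult)
  from cyc_irred[OF pr fac] show False
  proof
    assume "degree P = 0"
    then obtain a where "P = [:a:]" by (metis degree_eq_zeroE)
    thus False using Pnz evP by (simp add: mp_pCons)
  next
    assume "degree (smult (unit_factor c) (primitive_part q)) = 0"
    hence "degree (cyc p) = degree P"
      using fac Pnz by (metis add_0_right degree_mult_eq mult_zero_right smult_eq_0_iff cyc_irred pr ccyc content_0 zero_neq_one)
    thus False using degree_cyc[of p] p1 dP dB by simp
  qed
qed

lemma lin_indep:
  assumes pr: "prime p" and S: "(\<Sum>k<p. of_int (a k) * zeta p ^ k) = 0"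
  shows "\<forall>k<p. a k = a 0"
proof -
  have p1: "p > 1" using pr prime_gt_1_nat by blast
  define A where "A = (\<Sum>k<p. monom (a k - a (p - 1)) k)"
  have cA: "coeff A i = (if i < p then a i - a (p - 1) else 0)" for i
    by (simp add: A_def coeff_sum)
  have "ev A (zeta p) = (\<Sum>k<p. of_int (a k) * zeta p ^ k) - of_int (a (p-1)) * ev (cyc p) (zeta p)"
    by (simp add: A_def ev_sum ev_monom cyc_def algebra_simps sum_subtractf sum_distrib_left sum_distrib_right)
  hence evA: "ev A (zeta p) = 0" using S ev_cyc[OF p1] by simp
  have A0: "A = 0"
  proof (rule ccontr)
    assume "A \<noteq> 0"
    hence "degree A \<ge> p - 1" using min_deg[OF pr _ evA] by blast
    moreover have "degree A \<le> p - 2"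
    proof (rule degree_le, intro allI impI)
      fix i assume "p - 2 < i"
      then have "i \<ge> p \<or> i = p - 1" using p1 by linarith
      then show "coeff A i = 0" by (auto simp: cA)
    qed
    ultimately show False using p1 by simp
  qed
  have "a k = a (p - 1)" if "k < p" for k using cA[of k] A0 that by simp
  then show ?thesis using p1 by (metis zero_less_iff_neq_zero not_one_less_zero)
qed


locale ffp =
  fixes p m :: nat and ty :: "'a::{field,finite} itself"
  assumes pr: "prime p" and ch: "CHAR('a) = p" and cd: "CARD('a) = p ^ m"
    and m1: "m \<ge> 1"
begin

lemma p1: "p > 1" using pr prime_gt_1_nat by blast

lemma of_nat_eq_mod: "((of_nat a :: 'a) = of_nat b) \<longleftrightarrow> a mod p = b mod p"
proof -
  have *: "((of_nat a :: 'a) = of_nat b) \<longleftrightarrow> a mod p = b mod p" if "a \<le> b" for a b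
  proof -
    have "((of_nat a :: 'a) = of_nat b) \<longleftrightarrow> (of_nat (b - a) :: 'a) = 0"
      using that by (metis add_diff_inverse_nat add_cancel_left_right not_less of_nat_add)
    also have "\<dots> \<longleftrightarrow> p dvd (b - a)" using ch of_nat_eq_0_iff_char_dvd by metis
    also have "\<dots> \<longleftrightarrow> a mod p = b mod p" using that by (metis mod_eq_dvd_iff_nat)
    finally show ?thesis .
  qed
  show ?thesis using *[of a b] *[of b a] by (cases "a \<le> b") auto
qed

lemma of_nat_inj_p: "a < p \<Longrightarrow> b < p \<Longrightarrow> ((of_nat a :: 'a) = of_nat b) \<longleftrightarrow> a = b"
  using of_nat_eq_mod by simp

lemma of_nat_mod_p: "(of_nat (a mod p) :: 'a) = of_nat a"
  using of_nat_eq_mod by simp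

lemma of_nat_p: "(of_nat p :: 'a) = 0" by (metis ch of_nat_CHAR)

lemma frob_add: "((x::'a) + y) ^ (p ^ i) = x ^ (p ^ i) + y ^ (p ^ i)"
  using freshmans_dream'[of "p ^ i" i x y] ch pr by simp

lemma frob_sum: "(\<Sum>j\<in>S. (F j :: 'a)) ^ (p ^ i) = (\<Sum>j\<in>S. F j ^ (p ^ i))"
  using freshmans_dream_sum'[of "p ^ i" i F S] ch pr by simp

lemma of_nat_pow_p: "(of_nat k :: 'a) ^ p = of_nat k"
proof (induction k)
  case 0 then show ?case using p1 by simp
next
  case (Suc k)
  have "(of_nat (Suc k) :: 'a) ^ p = (of_nat k + 1) ^ (p ^ 1)" by (simp add: add.commute)
  also have "\<dots> = of_nat k ^ (p^1) + 1 ^ (p ^ 1)" by (rule frob_add)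
  finally show ?case using Suc by (simp add: add.commute)
qed

lemma card_univ_eq: "card (UNIV :: 'a set) = p ^ m" using cd by simp

lemma pow_card: "(x::'a) ^ (p ^ m) = x"
proof (cases "x = 0")
  case False
  have "x * (\<Prod>y\<in>UNIV-{0}. x * y) = x * x ^ (card (UNIV :: 'a set) - 1) * \<Prod>(UNIV-{0})"
    by (simp add: prod.distrib mult_ac)
  also have "x * x ^ (card (UNIV :: 'a set) - 1) = x ^ Suc (card (UNIV :: 'a set) - 1)"
    by (subst power_Suc) auto
  also have "Suc (card (UNIV :: 'a set) - 1) = card (UNIV :: 'a set)"
    using finite_UNIV_card_ge_0[where ?'a = 'a] by simp
  also have "(\<Prod>y\<in>UNIV-{0}. x * y) = (\<Prod>y\<in>UNIV-{0}. y)"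
    by (rule prod.reindex_bij_witness[of _ "\<lambda>y. y / x" "\<lambda>y. x * y"]) (use False in auto)
  finally show ?thesis
    using card_univ_eq by simp
next
  case True then show ?thesis using p1 by simp
qed

definition PF :: "'a set" where "PF = {y. y ^ p = y}"

lemma of_nat_in_PF: "of_nat k \<in> PF" unfolding PF_def using of_nat_pow_p by simp

lemma card_of_nat_range: "card ((of_nat :: nat \<Rightarrow> 'a) ` {..<p}) = p"
  by (subst card_image) (auto simp: inj_on_def of_nat_inj_p)

lemma PF_eq: "PF = (of_nat :: nat \<Rightarrow> 'a) ` {..<p}"
proof -
  let ?P = "monom (1::'a) p - [:0,1:]"
  have deg: "degree ?P \<le> p" using p1 by (intro degree_diff_le) (auto simp: degree_monom_le)
  obtain j where j: "p = Suc (Suc j)" using p1 by (metis less_imp_Suc_add plus_1_eq_Suc add_Suc_right)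
  have "coeff ?P p = 1" using j by simp
  hence nz: "?P \<noteq> 0" by (metis coeff_0 zero_neq_one)
  have "PF = {x. poly ?P x = 0}" unfolding PF_def by (auto simp: poly_monom)
  hence cPF: "card PF \<le> p" using card_poly_roots_bound[OF nz] deg by simp
  have sub: "(of_nat :: nat \<Rightarrow> 'a) ` {..<p} \<subseteq> PF" using of_nat_in_PF by auto
  have "card ((of_nat :: nat \<Rightarrow> 'a) ` {..<p}) \<le> card PF" by (rule card_mono[OF _ sub]) simp
  then have "card ((of_nat :: nat \<Rightarrow> 'a) ` {..<p}) = card PF" using cPF card_of_nat_range by simp
  then have "(of_nat :: nat \<Rightarrow> 'a) ` {..<p} = PF"
    by (intro card_subset_eq[OF _ sub]) simp_all
  then show ?thesis by simp
qed

lemma PF_cases: assumes "y \<in> PF" obtains k where "k < p" "y = of_nat k"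
  using assms PF_eq by auto

lemma PF_inverse: "y \<in> PF \<Longrightarrow> inverse y \<in> PF"
  unfolding PF_def by (simp add: power_inverse)

lemma PF_mult: "y \<in> PF \<Longrightarrow> z \<in> PF \<Longrightarrow> y * z \<in> PF"
  unfolding PF_def by (simp add: power_mult_distrib)

definition T :: "'a \<Rightarrow> 'a" where "T x = trace_elem p m x"

lemma T_add: "T (x + y) = T x + T y"
  unfolding T_def trace_elem_def by (simp add: frob_add sum.distrib)

lemma T_PF_mult: assumes "c \<in> PF" shows "T (c * x) = c * T x"
proof -
  have "c ^ (p ^ i) = c" for i
    by (induction i) (use assms in \<open>simp_all add: PF_def power_mult flip: power_Suc2\<close>)
  then show ?thesis unfolding T_def trace_elem_def by (simp add: power_mult_distrib sum_distrib_left)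
qed

lemma T_in_PF: "T x \<in> PF"
proof -
  define g where "g i = x ^ (p ^ i)" for i
  have "T x ^ p = (\<Sum>i<m. g i ^ p)"
    using frob_sum[of g "{..<m}" 1] unfolding T_def trace_elem_def g_def by simp
  also have "\<dots> = (\<Sum>i<m. g (Suc i))"
    by (simp add: g_def power_mult[symmetric] mult.commute)
  also have "\<dots> = (\<Sum>i<m. g i)"
  proof -
    have a: "(\<Sum>i<Suc m. g i) = g 0 + (\<Sum>i<m. g (Suc i))" by (rule sum.lessThan_Suc_shift)
    have b: "(\<Sum>i<Suc m. g i) = (\<Sum>i<m. g i) + g m" by simp
    have c: "g m = g 0" using pow_card by (simp add: g_def)
    show ?thesis using a b c by simp
  qed
  also have "\<dots> = T x" by (simp add: T_def trace_elem_def g_def)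
  finally show ?thesis unfolding PF_def by simp
qed

lemma Tr_eq: "Tr p m x < p \<and> of_nat (Tr p m x) = T x"
proof -
  obtain k where k: "k < p" "T x = of_nat k" using T_in_PF PF_cases by blast
  have "Tr p m x = k" unfolding Tr_def
  proof (rule the_equality)
    show "k < p \<and> of_nat k = trace_elem p m x" using k by (simp add: T_def)
    fix j assume "j < p \<and> (of_nat j :: 'a) = trace_elem p m x"
    then have "j < p" "(of_nat j :: 'a) = of_nat k" using k by (auto simp: T_def)
    then show "j = k" using k of_nat_inj_p by metis
  qed
  then show ?thesis using k by simp
qed

lemma Tr_lt: "Tr p m (x::'a) < p" using Tr_eq by blast
lemma Tr_of_nat: "(of_nat (Tr p m x) :: 'a) = T x" using Tr_eq by blast

lemma Tr_eq_iff: "Tr p m (x::'a) = Tr p m y \<longleftrightarrow> T x = T y"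
  using Tr_lt[of x] Tr_lt[of y] of_nat_inj_p Tr_of_nat by metis

lemma Tr_eq_nat_iff: "k < p \<Longrightarrow> Tr p m (x::'a) = k \<longleftrightarrow> T x = of_nat k"
  using Tr_lt[of x] of_nat_inj_p Tr_of_nat by metis

lemma T_nonzero: "\<exists>x. T x \<noteq> 0"
proof -
  define P :: "'a poly" where "P = (\<Sum>i<m. monom 1 (p ^ i))"
  have pP: "poly P x = T x" for x by (simp add: P_def T_def trace_elem_def poly_sum poly_monom)
  have inj: "inj_on (\<lambda>i. p ^ i) {..<m}" using p1 by (auto simp: inj_on_def)
  have cP: "coeff P (p ^ (m - 1)) = 1"
  proof -
    have "coeff P (p ^ (m - 1)) = (\<Sum>i<m. if p ^ i = p ^ (m - 1) then 1 else 0)"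
      by (simp add: P_def coeff_sum coeff_monom)
    also have "\<dots> = (\<Sum>i\<in>{m - 1}. 1)"
      by (rule sum.mono_neutral_cong_right) (use m1 p1 in auto)
    finally show ?thesis by simp
  qed
  have dP: "degree P \<le> p ^ (m - 1)"
  proof (rule degree_le, intro allI impI)
    fix i assume "p ^ (m - 1) < i"
    have "p ^ j \<noteq> i" if "j < m" for j
    proof -
      have "p ^ j \<le> p ^ (m - 1)" using that p1 by (intro power_increasing) auto
      then show ?thesis using \<open>p ^ (m - 1) < i\<close> by linarith
    qed
    then show "coeff P i = 0" by (simp add: P_def coeff_sum coeff_monom)
  qed
  have Pnz: "P \<noteq> 0" using cP by auto
  have "card {x. poly P x = 0} \<le> p ^ (m - 1)" using card_poly_roots_bound[OF Pnz] dP by simp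
  also have "\<dots> < p ^ m" using p1 m1 by (intro power_strict_increasing) auto
  finally have "{x. poly P x = 0} \<noteq> UNIV" using card_univ_eq by auto
  then show ?thesis using pP by auto
qed

lemma T_one: "\<exists>c. T c = 1"
proof -
  obtain x where x: "T x \<noteq> 0" using T_nonzero by blast
  have "T (inverse (T x) * x) = inverse (T x) * T x"
    by (rule T_PF_mult) (rule PF_inverse[OF T_in_PF])
  then show ?thesis using x by auto
qed

lemma T_zero: "T 0 = 0" using p1 by (simp add: T_def trace_elem_def power_0_left)

lemma T_minus: "T (- x) = - T x" using T_add[of x "-x"] T_zero by (metis add.inverse_unique add.right_inverse)

end


context ffp
begin

abbreviation z :: complex where "z \<equiv> zeta p"

lemma z_pow_mod: "z ^ (n mod p) = z ^ n"
proof -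
  have "z ^ n = z ^ (p * (n div p) + n mod p)" by simp
  also have "\<dots> = (z ^ p) ^ (n div p) * z ^ (n mod p)" by (simp only: power_add power_mult)
  also have "\<dots> = z ^ (n mod p)" using zeta_pow_p p1 by simp
  finally show ?thesis by simp
qed

lemma Tr_add: "Tr p m (x + y :: 'a) = (Tr p m x + Tr p m y) mod p"
proof -
  have "(of_nat (Tr p m (x + y)) :: 'a) = of_nat (Tr p m x + Tr p m y)"
    by (simp add: Tr_of_nat T_add)
  hence "Tr p m (x + y) mod p = (Tr p m x + Tr p m y) mod p" using of_nat_eq_mod by blast
  thus ?thesis using Tr_lt[of "x+y"] by simp
qed

lemma Tr_zero: "Tr p m (0::'a) = 0"
  using Tr_eq_nat_iff[of 0 0] p1 T_zero by simp

lemma chi_add: "z ^ Tr p m (x + y :: 'a) = z ^ Tr p m x * z ^ Tr p m y"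
  by (simp add: Tr_add z_pow_mod power_add)

lemma orth: assumes "\<omega> \<noteq> 0" shows "(\<Sum>x\<in>UNIV. z ^ Tr p m (\<omega> * x :: 'a)) = 0"
proof -
  let ?S = "\<Sum>x\<in>UNIV. z ^ Tr p m (x :: 'a)"
  have first: "(\<Sum>x\<in>UNIV. z ^ Tr p m (\<omega> * x :: 'a)) = ?S"
    by (rule sum.reindex_bij_witness[of _ "\<lambda>y. y / \<omega>" "\<lambda>x. \<omega> * x"]) (use assms in auto)
  obtain c :: 'a where c: "T c = 1" using T_one by blast
  have Trc: "Tr p m c = 1" using Tr_eq_nat_iff[of 1 c] p1 c by simp
  have "?S = (\<Sum>x\<in>UNIV. z ^ Tr p m (x + c))"
    by (rule sum.reindex_bij_witness[of _ "\<lambda>x. x + c" "\<lambda>y. y - c"]) auto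
  also have "\<dots> = ?S * z" by (simp add: chi_add Trc sum_distrib_right)
  finally have "?S * (z - 1) = 0" by (simp add: algebra_simps)
  hence "?S = 0" using zeta_ne1[OF p1] by simp
  then show ?thesis using first by simp
qed

lemma fiber:
  assumes "finite U" "\<forall>x\<in>U. h x < p"
  shows "(\<Sum>x\<in>U. z ^ h x) = (\<Sum>k<p. of_nat (card {x\<in>U. h x = k}) * z ^ k)"
proof -
  have "(\<Sum>x\<in>U. z ^ h x) = (\<Sum>k<p. \<Sum>x\<in>{x\<in>U. h x = k}. z ^ h x)"
    by (rule sum.group[symmetric]) (use assms in auto)
  also have "\<dots> = (\<Sum>k<p. of_nat (card {x\<in>U. h x = k}) * z ^ k)"
    by (intro sum.cong refl) simp
  finally show ?thesis .
qed

lemma card_fibers: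
  assumes "finite U" "\<forall>x\<in>U. h x < p"
  shows "(\<Sum>k<p. card {x\<in>U. h x = k}) = card U"
proof -
  have "(\<Sum>k<p. \<Sum>x\<in>{x\<in>U. h x = k}. (1::nat)) = (\<Sum>x\<in>U. 1)"
    by (rule sum.group) (use assms in auto)
  then show ?thesis by simp
qed

lemma dist0:
  assumes U: "finite U" "\<forall>x\<in>U. h x < p" and j: "j < p"
    and S: "(\<Sum>x\<in>U. z ^ h x) = of_int c * z ^ j"
  shows "int p * int (card {x\<in>U. h x = 0}) = int (card U) + (if j = 0 then int p * c else 0) - c"
proof -
  define N where "N k = int (card {x\<in>U. h x = k})" for k
  define b where "b k = N k - (if k = j then c else 0)" for k
  have "(\<Sum>k<p. of_int (N k) * z ^ k) = of_int c * z ^ j"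
    using fiber[OF U] S by (simp add: N_def)
  moreover have "(\<Sum>k<p. of_int (if k = j then c else 0) * z ^ k) = of_int c * z ^ j"
  proof -
    have "(\<Sum>k<p. of_int (if k = j then c else 0) * z ^ k) = (\<Sum>k\<in>{j}. of_int c * z ^ k)"
      by (rule sum.mono_neutral_cong_right) (use j in auto)
    then show ?thesis by simp
  qed
  ultimately have "(\<Sum>k<p. of_int (b k) * z ^ k) = 0"
    by (simp add: b_def algebra_simps sum_subtractf)
  hence bk: "\<forall>k<p. b k = b 0" by (rule lin_indep[OF pr])
  have "(\<Sum>k<p. N k) = int (card U)"
    using card_fibers[OF U] unfolding N_def by (metis of_nat_sum)
  moreover have "(\<Sum>k<p. N k) = (\<Sum>k<p. b 0 + (if k = j then c else 0))"
    by (intro sum.cong refl) (use bk in \<open>auto simp: b_def\<close>)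
  moreover have "(\<Sum>k<p. b 0 + (if k = j then c else 0)) = int p * b 0 + c"
  proof -
    have "(\<Sum>k<p. (if k = j then c else 0)) = (\<Sum>k\<in>{j}. c)"
      by (rule sum.mono_neutral_cong_right) (use j in auto)
    then show ?thesis by (simp add: sum.distrib)
  qed
  ultimately have cU: "int (card U) = int p * b 0 + c" by simp
  have "N 0 = b 0 + (if j = 0 then c else 0)" by (simp add: b_def)
  then show ?thesis using cU by (simp add: N_def algebra_simps)
qed

lemma powi_diff:
  assumes "a < p" "b < p"
  shows "z powi (int a - int b) = z ^ ((a + p - b) mod p)"
proof -
  have "z powi (int a - int b) = z powi (int (a + p - b) - int p)"
    using assms by (simp add: of_nat_diff)
  also have "\<dots> = z ^ (a + p - b) * inverse (z ^ p)"
    using zeta_nz by (simp add: power_int_diff power_int_of_nat divide_inverse)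
  also have "\<dots> = z ^ (a + p - b)" using zeta_pow_p p1 by simp
  finally show ?thesis by (simp add: z_pow_mod)
qed

lemma hmod0: "a < p \<Longrightarrow> b < p \<Longrightarrow> ((a + p - b) mod p = 0) \<longleftrightarrow> a = b"
proof -
  assume ab: "a < p" "b < p"
  show ?thesis
  proof (cases "a \<ge> b")
    case True
    then have "a + p - b = (a - b) + p" by simp
    then have "(a + p - b) mod p = (a - b) mod p" by simp
    also have "\<dots> = a - b" using ab by simp
    finally show ?thesis using True by simp
  next
    case False
    then have "(a + p - b) mod p = a + p - b" using ab by simp
    then show ?thesis using False ab by simp
  qed
qed

end


locale wrp = ffp p m ty for p m :: nat and ty :: "'a::{field,finite} itself" +
  fixes f :: "'a \<Rightarrow> nat" and s :: nat and eps :: int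
  assumes WR: "WRPB p m s f" and HS: "has_sign p m s f eps" and oddp: "odd p"
    and ev: "even (m + s)"
begin

lemma f_lt: "f x < p" using WR unfolding WRPB_def by blast
lemma bal: "walsh p m f 0 = 0" using WR unfolding WRPB_def balanced_def by blast
lemma f0: "f 0 = 0" using WR unfolding WRPB_def by blast
lemma plat: "plateaued p m s f" using WR unfolding WRPB_def by blast
lemma homog: "\<exists>t::nat. t > 0 \<and> even t \<and> gcd (t - 1) (p - 1) = 1 \<and>
        (\<forall>a\<in>{1..<p}. \<forall>x. f (of_nat a * x) = (a ^ t * f x) mod p)"
  using WR unfolding WRPB_def by blast

abbreviation Sf where "Sf \<equiv> support_walsh p m s f"

definition gs :: "'a \<Rightarrow> nat" where
  "gs = (SOME g. (\<forall>\<omega>. g \<omega> < p) \<and> (\<forall>\<omega>. \<omega> \<notin> Sf \<longrightarrow> g \<omega> = 0) \<and>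
        (\<forall>\<omega>\<in>Sf. walsh p m f \<omega> = of_int eps * sqrt_pstar p ^ (m + s) * z ^ g \<omega>))"

lemma gs_prop: "(\<forall>\<omega>. gs \<omega> < p) \<and> (\<forall>\<omega>. \<omega> \<notin> Sf \<longrightarrow> gs \<omega> = 0) \<and>
        (\<forall>\<omega>\<in>Sf. walsh p m f \<omega> = of_int eps * sqrt_pstar p ^ (m + s) * z ^ gs \<omega>)"
proof -
  have "\<exists>g. (\<forall>\<omega>. g \<omega> < p) \<and> (\<forall>\<omega>. \<omega> \<notin> Sf \<longrightarrow> g \<omega> = 0) \<and>
        (\<forall>\<omega>\<in>Sf. walsh p m f \<omega> = of_int eps * sqrt_pstar p ^ (m + s) * z ^ g \<omega>)"
    using HS unfolding has_sign_def by blast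
  then show ?thesis unfolding gs_def by (rule someI_ex)
qed

lemma gs_lt: "gs \<omega> < p" using gs_prop by blast

definition kk :: nat where "kk = (m + s) div 2"

definition eps0 :: int where "eps0 = eps * eta0_minus1 p ^ kk"

definition CC :: int where "CC = eps0 * int p ^ kk"

lemma eps_pm: "eps = 1 \<or> eps = -1" using HS unfolding has_sign_def by auto

lemma eta_pm: "eta0_minus1 p = 1 \<or> eta0_minus1 p = -1" unfolding eta0_minus1_def by auto

lemma eps0_pm: "eps0 = 1 \<or> eps0 = -1"
proof -
  have "eta0_minus1 p ^ kk = 1 \<or> eta0_minus1 p ^ kk = -1"
    using eta_pm by (metis neg_one_even_power neg_one_odd_power power_one)
  then show ?thesis using eps_pm unfolding eps0_def by auto
qed

lemma mk: "m + s = 2 * kk" using ev unfolding kk_def by simp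

lemma sqrt_pstar_sq: "sqrt_pstar p ^ 2 = of_int (eta0_minus1 p * int p)"
proof (cases "p mod 4 = 1")
  case True
  then show ?thesis unfolding sqrt_pstar_def eta0_minus1_def
    by (simp add: power_mult_distrib flip: of_real_power)
next
  case False
  then show ?thesis unfolding sqrt_pstar_def eta0_minus1_def
    by (simp add: power_mult_distrib flip: of_real_power)
qed

lemma C_eq: "of_int eps * sqrt_pstar p ^ (m + s) = of_int CC"
proof -
  have "sqrt_pstar p ^ (m + s) = (sqrt_pstar p ^ 2) ^ kk" by (simp add: mk power_mult)
  also have "\<dots> = of_int ((eta0_minus1 p * int p) ^ kk)" by (simp add: sqrt_pstar_sq)
  finally show ?thesis unfolding CC_def eps0_def by (simp add: power_mult_distrib algebra_simps)
qed

lemma walsh_on: "\<omega> \<in> Sf \<Longrightarrow> walsh p m f \<omega> = of_int CC * z ^ gs \<omega>"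
  using gs_prop C_eq by simp

lemma walsh_off: assumes "\<omega> \<notin> Sf" shows "walsh p m f \<omega> = 0"
proof -
  have "(cmod (walsh p m f \<omega>))\<^sup>2 \<in> {0, real p ^ (m + s)}" using plat unfolding plateaued_def by blast
  moreover have "(cmod (walsh p m f \<omega>))\<^sup>2 \<noteq> real p ^ (m + s)" using assms unfolding support_walsh_def by simp
  ultimately show ?thesis by simp
qed

definition hh :: "'a \<Rightarrow> 'a \<Rightarrow> nat" where "hh \<omega> x = (f x + p - Tr p m (\<omega> * x)) mod p"

lemma hh_lt: "hh \<omega> x < p" unfolding hh_def using p1 by simp

lemma walsh_sum: "walsh p m f \<omega> = (\<Sum>x\<in>UNIV. z ^ hh \<omega> x)"
  unfolding walsh_def hh_def using powi_diff f_lt Tr_lt by simp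

definition AA :: "'a \<Rightarrow> nat" where "AA \<omega> = card {x. f x = Tr p m (\<omega> * x)}"

lemma AA_hh: "AA \<omega> = card {x\<in>UNIV. hh \<omega> x = 0}"
  unfolding AA_def hh_def using hmod0 f_lt Tr_lt by simp

definition XX :: "'a \<Rightarrow> int" where
  "XX \<omega> = (if \<omega> \<in> Sf then (if gs \<omega> = 0 then (int p - 1) * CC else - CC) else 0)"

lemma AA_formula: "int p * int (AA \<omega>) = int (p ^ m) + XX \<omega>"
proof (cases "\<omega> \<in> Sf")
  case True
  have "(\<Sum>x\<in>UNIV. z ^ hh \<omega> x) = of_int CC * z ^ gs \<omega>" using walsh_on[OF True] walsh_sum by simp
  from dist0[OF _ _ gs_lt this] have
    "int p * int (card {x\<in>UNIV. hh \<omega> x = 0}) = int (card (UNIV::'a set)) + (if gs \<omega> = 0 then int p * CC else 0) - CC"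
    using hh_lt by simp
  then show ?thesis using True card_univ_eq by (simp add: AA_hh XX_def algebra_simps)
next
  case False
  have "(\<Sum>x\<in>UNIV. z ^ hh \<omega> x) = of_int 0 * z ^ 0" using walsh_off[OF False] walsh_sum by simp
  from dist0[OF _ _ _ this] have
    "int p * int (card {x\<in>UNIV. hh \<omega> x = 0}) = int (card (UNIV::'a set))"
    using hh_lt p1 by simp
  then show ?thesis using False card_univ_eq by (simp add: AA_hh XX_def)
qed

lemma zero_notin_S: "0 \<notin> Sf"
  using bal p1 unfolding support_walsh_def by simp

lemma card_f0: "int p * int (card {x. f x = 0}) = int (p ^ m)"
proof -
  have "AA 0 = card {x. f x = 0}" unfolding AA_def using Tr_zero by simp
  then show ?thesis using AA_formula[of 0] zero_notin_S by (simp add: XX_def)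
qed

lemma card_Tr0: assumes "(\<omega>::'a) \<noteq> 0" shows "int p * int (card {x. Tr p m (\<omega> * x) = 0}) = int (p ^ m)"
proof -
  have "(\<Sum>x\<in>UNIV. z ^ Tr p m (\<omega> * x)) = of_int 0 * z ^ 0" using orth[OF assms] by simp
  from dist0[OF _ _ _ this] show ?thesis using Tr_lt p1 card_univ_eq by simp
qed

end


context wrp
begin

lemma of_nat_ne0: "0 < c \<Longrightarrow> c < p \<Longrightarrow> (of_nat c :: 'a) \<noteq> 0"
  using of_nat_inj_p[of c 0] p1 by auto

lemma AA_scale:
  assumes c: "1 \<le> c" "c < p"
  shows "AA (of_nat c * \<omega>) = AA \<omega>"
proof -
  obtain t where tt: "t > 0 \<and> even t \<and> gcd (t - 1) (p - 1) = 1 \<and>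
        (\<forall>a\<in>{1..<p}. \<forall>x. f (of_nat a * x) = (a ^ t * f x) mod p)"
    using homog by (rule exE)
  have t: "t > 0" "even t" "gcd (t - 1) (p - 1) = 1" using tt by simp_all
  have hom: "\<forall>a\<in>{1..<p}. \<forall>x. f (of_nat a * x) = (a ^ t * f x) mod p" using tt by blast
  have "t \<noteq> 1" using t(2) by (metis odd_one)
  hence t1: "t - 1 \<noteq> 0" using t by simp
  obtain u v where uv: "(t - 1) * u = (p - 1) * v + gcd (t - 1) (p - 1)"
    using bezout_nat[OF t1] by blast
  hence uv1: "(t - 1) * u = (p - 1) * v + 1" using t by simp
  define \<gamma> where "\<gamma> = (of_nat c :: 'a)"
  have g0: "\<gamma> \<noteq> 0" unfolding \<gamma>_def using c of_nat_ne0 by simp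
  have gp: "\<gamma> ^ p = \<gamma>" unfolding \<gamma>_def by (rule of_nat_pow_p)
  have gp1: "\<gamma> ^ (p - 1) = 1"
  proof -
    have "\<gamma> ^ p = \<gamma> * \<gamma> ^ (p - 1)" using p1 by (simp flip: power_Suc)
    hence "\<gamma> * \<gamma> ^ (p - 1) = \<gamma> * 1" using gp by simp
    then show ?thesis using g0 by simp
  qed
  define \<alpha> where "\<alpha> = \<gamma> ^ u"
  have at: "\<alpha> ^ (t - 1) = \<gamma>"
  proof -
    have "\<alpha> ^ (t - 1) = \<gamma> ^ ((t - 1) * u)" unfolding \<alpha>_def by (simp add: power_mult[symmetric] mult.commute)
    also have "\<dots> = (\<gamma> ^ (p - 1)) ^ v * \<gamma>" by (simp only: uv1 power_add power_mult power_one_right)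
    finally show ?thesis using gp1 by simp
  qed
  have a0: "\<alpha> \<noteq> 0" unfolding \<alpha>_def using g0 by simp
  have "\<alpha> ^ p = \<gamma> ^ (u * p)" unfolding \<alpha>_def by (rule power_mult[symmetric])
  also have "u * p = p * u" by (rule mult.commute)
  also have "\<gamma> ^ (p * u) = (\<gamma> ^ p) ^ u" by (rule power_mult)
  also have "\<dots> = \<alpha>" using gp unfolding \<alpha>_def by simp
  finally have aPF: "\<alpha> \<in> PF" unfolding PF_def by simp
  obtain a where a: "a < p" "\<alpha> = of_nat a" using PF_cases[OF aPF] by blast
  have "a \<noteq> 0" by (metis a(2) a0 of_nat_0)
  hence a1: "a \<in> {1..<p}" using a(1) by simp
  have ga: "\<gamma> * \<alpha> = \<alpha> ^ t"
  proof -
    have "t = Suc (t - 1)" using t(1) by simp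
    hence "\<alpha> ^ t = \<alpha> ^ (t - 1) * \<alpha>" by (metis power_Suc2)
    then show ?thesis using at by simp
  qed
  have gaPF: "\<gamma> * \<alpha> \<in> PF" unfolding \<gamma>_def by (rule PF_mult[OF of_nat_in_PF aPF[unfolded \<gamma>_def]])
  have key: "f (\<alpha> * x) = Tr p m (\<gamma> * \<omega> * (\<alpha> * x)) \<longleftrightarrow> f x = Tr p m (\<omega> * x)" for x
  proof -
    have "(of_nat (f (\<alpha> * x)) :: 'a) = of_nat ((a ^ t * f x) mod p)" using hom a1 a by simp
    also have "\<dots> = \<alpha> ^ t * of_nat (f x)" using a by (simp add: of_nat_mod_p)
    finally have e1: "(of_nat (f (\<alpha> * x)) :: 'a) = \<alpha> ^ t * of_nat (f x)" .
    have "T (\<gamma> * \<omega> * (\<alpha> * x)) = T ((\<gamma> * \<alpha>) * (\<omega> * x))" by (simp add: ac_simps)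
    also have "\<dots> = \<alpha> ^ t * T (\<omega> * x)" using T_PF_mult[OF gaPF] ga by simp
    finally have e2: "T (\<gamma> * \<omega> * (\<alpha> * x)) = \<alpha> ^ t * T (\<omega> * x)" .
    have "f (\<alpha> * x) = Tr p m (\<gamma> * \<omega> * (\<alpha> * x)) \<longleftrightarrow> (of_nat (f (\<alpha> * x)) :: 'a) = T (\<gamma> * \<omega> * (\<alpha> * x))"
      using Tr_eq_nat_iff f_lt by metis
    also have "\<dots> \<longleftrightarrow> (of_nat (f x) :: 'a) = T (\<omega> * x)" using e1 e2 a0 by simp
    also have "\<dots> \<longleftrightarrow> f x = Tr p m (\<omega> * x)" using Tr_eq_nat_iff f_lt by metis
    finally show ?thesis .
  qed
  have seteq: "{y. f y = Tr p m (\<gamma> * \<omega> * y)} = (\<lambda>x. \<alpha> * x) ` {x. f (\<alpha> * x) = Tr p m (\<gamma> * \<omega> * (\<alpha> * x))}"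
  proof (rule set_eqI, rule iffI)
    fix y assume "y \<in> {y. f y = Tr p m (\<gamma> * \<omega> * y)}"
    hence y: "f y = Tr p m (\<gamma> * \<omega> * y)" by simp
    have ya: "\<alpha> * (y / \<alpha>) = y" using a0 by simp
    have mem: "y / \<alpha> \<in> {x. f (\<alpha> * x) = Tr p m (\<gamma> * \<omega> * (\<alpha> * x))}" using y ya by simp
    show "y \<in> (\<lambda>x. \<alpha> * x) ` {x. f (\<alpha> * x) = Tr p m (\<gamma> * \<omega> * (\<alpha> * x))}"
      by (rule image_eqI[where f="\<lambda>x. \<alpha> * x", OF ya[symmetric] mem])
  next
    fix y assume "y \<in> (\<lambda>x. \<alpha> * x) ` {x. f (\<alpha> * x) = Tr p m (\<gamma> * \<omega> * (\<alpha> * x))}"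
    then obtain x where "y = \<alpha> * x" "f (\<alpha> * x) = Tr p m (\<gamma> * \<omega> * (\<alpha> * x))" by blast
    then show "y \<in> {y. f y = Tr p m (\<gamma> * \<omega> * y)}" by simp
  qed
  have "AA (of_nat c * \<omega>) = card {y. f y = Tr p m (\<gamma> * \<omega> * y)}"
    unfolding AA_def \<gamma>_def by (simp only: mult.assoc)
  also have "\<dots> = card ((\<lambda>x. \<alpha> * x) ` {x. f (\<alpha> * x) = Tr p m (\<gamma> * \<omega> * (\<alpha> * x))})"
    by (simp only: seteq)
  also have "\<dots> = card {x. f (\<alpha> * x) = Tr p m (\<gamma> * \<omega> * (\<alpha> * x))}"
    by (rule card_image) (use a0 in \<open>auto simp: inj_on_def\<close>)
  also have "\<dots> = AA \<omega>" unfolding AA_def using key by simp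
  finally show ?thesis .
qed

end


context wrp
begin

definition NN :: "'a \<Rightarrow> nat" where "NN \<omega> = card {x. f x = 0 \<and> Tr p m (\<omega> * x) = 0}"

lemma card_as_sum: "card {x. R x} = (\<Sum>x\<in>(UNIV::'a set). if R x then 1 else 0)"
  by (simp add: sum.If_cases)

lemma per_x:
  "card {c\<in>{..<p}. f x = Tr p m (of_nat c * \<omega> * x)} =
     (if Tr p m (\<omega> * x) = 0 then (if f x = 0 then p else 0) else 1)"
proof -
  have eq: "f x = Tr p m (of_nat c * \<omega> * x) \<longleftrightarrow> (of_nat (f x) :: 'a) = of_nat c * T (\<omega> * x)" for c
  proof -
    have e1: "Tr p m (of_nat c * \<omega> * x) = f x \<longleftrightarrow> T (of_nat c * \<omega> * x) = (of_nat (f x) :: 'a)"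
      by (rule Tr_eq_nat_iff[OF f_lt])
    have e2: "T (of_nat c * \<omega> * x) = of_nat c * T (\<omega> * x)"
      using T_PF_mult[OF of_nat_in_PF, of c "\<omega> * x"] by (simp only: mult.assoc)
    have "f x = Tr p m (of_nat c * \<omega> * x) \<longleftrightarrow> Tr p m (of_nat c * \<omega> * x) = f x" by (rule eq_commute)
    also have "\<dots> \<longleftrightarrow> T (of_nat c * \<omega> * x) = (of_nat (f x) :: 'a)" by (rule e1)
    also have "\<dots> \<longleftrightarrow> of_nat c * T (\<omega> * x) = (of_nat (f x) :: 'a)" by (simp only: e2)
    also have "\<dots> \<longleftrightarrow> (of_nat (f x) :: 'a) = of_nat c * T (\<omega> * x)" by (rule eq_commute)
    finally show ?thesis .
  qed
  show ?thesis
  proof (cases "Tr p m (\<omega> * x) = 0")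
    case True
    hence T0: "T (\<omega> * x) = 0" using Tr_eq_nat_iff[of 0 "\<omega> * x"] p1 by simp
    have f0iff: "(of_nat (f x) :: 'a) = 0 \<longleftrightarrow> f x = 0" using of_nat_inj_p[of "f x" 0] f_lt p1 by simp
    have "{c\<in>{..<p}. f x = Tr p m (of_nat c * \<omega> * x)} = {c\<in>{..<p}. f x = 0}"
      by (rule Collect_cong) (simp only: eq T0 mult_zero_right f0iff)
    then show ?thesis using True by simp
  next
    case False
    hence T0: "T (\<omega> * x) \<noteq> 0" using Tr_eq_nat_iff[of 0 "\<omega> * x"] p1 by simp
    have bPF: "of_nat (f x) * inverse (T (\<omega> * x)) \<in> PF"
      by (intro PF_mult of_nat_in_PF PF_inverse T_in_PF)
    obtain b where b: "b < p" "of_nat (f x) * inverse (T (\<omega> * x)) = (of_nat b :: 'a)"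
      using PF_cases[OF bPF] by blast
    have iff: "f x = Tr p m (of_nat c * \<omega> * x) \<longleftrightarrow> c = b" if cp: "c < p" for c
    proof -
      have "f x = Tr p m (of_nat c * \<omega> * x) \<longleftrightarrow> (of_nat (f x) :: 'a) = of_nat c * T (\<omega> * x)" by (rule eq)
      also have "\<dots> \<longleftrightarrow> (of_nat c :: 'a) = of_nat (f x) * inverse (T (\<omega> * x))"
      proof
        assume h: "(of_nat (f x) :: 'a) = of_nat c * T (\<omega> * x)"
        show "(of_nat c :: 'a) = of_nat (f x) * inverse (T (\<omega> * x))"
          unfolding h using T0 by (simp add: mult.assoc)
      next
        assume h: "(of_nat c :: 'a) = of_nat (f x) * inverse (T (\<omega> * x))"
        show "(of_nat (f x) :: 'a) = of_nat c * T (\<omega> * x)"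
          unfolding h using T0 by (simp add: mult.assoc)
      qed
      also have "\<dots> \<longleftrightarrow> (of_nat c :: 'a) = of_nat b" by (simp only: b(2))
      also have "\<dots> \<longleftrightarrow> c = b" by (rule of_nat_inj_p[OF cp b(1)])
      finally show ?thesis .
    qed
    have "{c\<in>{..<p}. f x = Tr p m (of_nat c * \<omega> * x)} = {b}"
    proof (rule set_eqI)
      fix c show "c \<in> {c\<in>{..<p}. f x = Tr p m (of_nat c * \<omega> * x)} \<longleftrightarrow> c \<in> {b}"
        using iff[of c] b(1) by auto
    qed
    then show ?thesis using False by simp
  qed
qed

lemma sum_AA:
  "(\<Sum>c<p. AA (of_nat c * \<omega>)) = p * NN \<omega> + (p ^ m - card {x. Tr p m (\<omega> * x) = 0})"
proof -
  have "(\<Sum>c<p. AA (of_nat c * \<omega>)) = (\<Sum>c<p. \<Sum>x\<in>UNIV. if f x = Tr p m (of_nat c * \<omega> * x) then 1 else 0)"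
    unfolding AA_def by (simp only: card_as_sum)
  also have "\<dots> = (\<Sum>x\<in>UNIV. \<Sum>c<p. if f x = Tr p m (of_nat c * \<omega> * x) then 1 else 0)"
    by (rule sum.swap)
  also have "\<dots> = (\<Sum>x\<in>UNIV. card ({..<p} \<inter> {c. f x = Tr p m (of_nat c * \<omega> * x)}))"
    by (simp add: sum.If_cases)
  also have "\<dots> = (\<Sum>x\<in>UNIV. card {c\<in>{..<p}. f x = Tr p m (of_nat c * \<omega> * x)})"
    by (rule sum.cong[OF refl], rule arg_cong[where f=card]) auto
  also have "\<dots> = (\<Sum>x\<in>UNIV. (if Tr p m (\<omega> * x) = 0 then (if f x = 0 then p else 0) else 1))"
    by (simp only: per_x)
  also have "\<dots> = (\<Sum>x\<in>UNIV. p * (if f x = 0 \<and> Tr p m (\<omega> * x) = 0 then 1 else 0)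
                      + (if Tr p m (\<omega> * x) \<noteq> 0 then 1 else 0))"
    by (rule sum.cong[OF refl]) (simp split: if_split)
  also have "\<dots> = p * (\<Sum>x\<in>UNIV. (if f x = 0 \<and> Tr p m (\<omega> * x) = 0 then 1 else 0))
                   + (\<Sum>x\<in>UNIV. (if Tr p m (\<omega> * x) \<noteq> 0 then 1 else 0))"
    by (simp only: sum.distrib sum_distrib_left)
  also have "\<dots> = p * NN \<omega> + card {x. Tr p m (\<omega> * x) \<noteq> 0}"
    unfolding NN_def card_as_sum ..
  also have "card {x. Tr p m (\<omega> * x) \<noteq> 0} = p ^ m - card {x. Tr p m (\<omega> * x) = 0}"
  proof -
    have "{x. Tr p m (\<omega> * x) \<noteq> 0} = UNIV - {x. Tr p m (\<omega> * x) = 0}" by auto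
    then show ?thesis using card_univ_eq by (simp add: card_Diff_subset)
  qed
  finally show ?thesis .
qed

end


context wrp
begin

lemma AA0: "int p * int (AA 0) = int (p ^ m)"
proof -
  have "AA 0 = card {x. f x = 0}" unfolding AA_def using Tr_zero by simp
  then show ?thesis using card_f0 by simp
qed

lemma NN_formula:
  assumes w: "\<omega> \<noteq> 0"
  shows "int p ^ 2 * int (NN \<omega>) = int (p ^ m) + (int p - 1) * XX \<omega>"
proof -
  define Z where "Z = card {x. Tr p m (\<omega> * x) = 0}"
  define q where "q = p ^ m"
  have pZ: "int p * int Z = int q" using card_Tr0[OF w] unfolding Z_def q_def by simp
  have Zq: "Z \<le> q"
  proof -
    have "1 \<le> int p" using p1 by simp
    hence "int Z * 1 \<le> int Z * int p" by (intro mult_left_mono) simp_all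
    hence "int Z \<le> int p * int Z" by (simp add: mult.commute)
    then show ?thesis using pZ by linarith
  qed
  have ps: "p = Suc (p - 1)" using p1 by simp
  have "(\<Sum>c<p. AA (of_nat c * \<omega>)) = AA (of_nat 0 * \<omega>) + (\<Sum>c<p - 1. AA (of_nat (Suc c) * \<omega>))"
    by (subst ps, subst sum.lessThan_Suc_shift) simp
  also have "(\<Sum>c<p - 1. AA (of_nat (Suc c) * \<omega>)) = (\<Sum>c<p - 1. AA \<omega>)"
    by (rule sum.cong[OF refl]) (rule AA_scale, auto)
  finally have "(\<Sum>c<p. AA (of_nat c * \<omega>)) = AA 0 + (p - 1) * AA \<omega>" by simp
  hence E: "AA 0 + (p - 1) * AA \<omega> = p * NN \<omega> + (q - Z)" using sum_AA[of \<omega>] unfolding Z_def q_def by simp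
  hence E': "int (AA 0) + (int p - 1) * int (AA \<omega>) = int p * int (NN \<omega>) + int q - int Z"
  proof -
    have "int (AA 0 + (p - 1) * AA \<omega>) = int (p * NN \<omega> + (q - Z))" using E by (rule arg_cong)
    moreover have "int (p - 1) = int p - 1" using p1 by simp
    moreover have "int (q - Z) = int q - int Z" using Zq by simp
    ultimately show ?thesis by (simp only: of_nat_add of_nat_mult)
  qed
  hence "int p * (int (AA 0) + (int p - 1) * int (AA \<omega>)) = int p * (int p * int (NN \<omega>) + int q - int Z)"
    by simp
  hence E2: "int p * int (AA 0) + (int p - 1) * (int p * int (AA \<omega>)) = int p ^ 2 * int (NN \<omega>) + int p * int q - int p * int Z"
    by (simp add: algebra_simps power2_eq_square)
  have A0: "int p * int (AA 0) = int q" using AA0 unfolding q_def .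
  have Aw: "int p * int (AA \<omega>) = int q + XX \<omega>" using AA_formula unfolding q_def .
  have E3: "int q + (int p - 1) * (int q + XX \<omega>) = int p ^ 2 * int (NN \<omega>) + int p * int q - int q"
    using E2 A0 Aw pZ by simp
  have "(int p - 1) * (int q + XX \<omega>) = int p * int q - int q + (int p - 1) * XX \<omega>"
    by (simp add: algebra_simps)
  then show ?thesis using E3 unfolding q_def by linarith
qed

definition D0 :: "'a set" where "D0 = {x. x \<noteq> 0 \<and> f x = 0}"

definition wt :: "'a \<Rightarrow> nat" where "wt \<omega> = card {d\<in>D0. Tr p m (\<omega> * d) \<noteq> 0}"

lemma card_D0: "card {x. f x = 0} = Suc (card D0)"
proof -
  have "{x. f x = 0} = insert 0 D0" unfolding D0_def using f0 by auto
  moreover have "0 \<notin> D0" unfolding D0_def by simp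
  ultimately show ?thesis by simp
qed

lemma f0_split: "card {x. f x = 0} = NN \<omega> + wt \<omega>"
proof -
  have "{x. f x = 0} = {x. f x = 0 \<and> Tr p m (\<omega> * x) = 0} \<union> {d\<in>D0. Tr p m (\<omega> * d) \<noteq> 0}"
    unfolding D0_def using Tr_zero by auto
  moreover have "{x. f x = 0 \<and> Tr p m (\<omega> * x) = 0} \<inter> {d\<in>D0. Tr p m (\<omega> * d) \<noteq> 0} = {}" by auto
  ultimately show ?thesis unfolding NN_def wt_def by (simp add: card_Un_disjoint)
qed

lemma wt_formula:
  assumes w: "\<omega> \<noteq> 0"
  shows "int p ^ 2 * int (wt \<omega>) = (int p - 1) * (int (p ^ m) - XX \<omega>)"
proof -
  have a: "int (card {x. f x = 0}) = int (NN \<omega>) + int (wt \<omega>)" using f0_split[of \<omega>] by (metis of_nat_add)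
  have "int p ^ 2 * int (card {x. f x = 0}) = int p * int (p ^ m)"
    using card_f0 by (simp add: power2_eq_square algebra_simps)
  hence "int p ^ 2 * int (NN \<omega>) + int p ^ 2 * int (wt \<omega>) = int p * int (p ^ m)"
    using a by (simp add: algebra_simps)
  hence "int p ^ 2 * int (wt \<omega>) = int p * int (p ^ m) - (int (p ^ m) + (int p - 1) * XX \<omega>)"
    using NN_formula[OF w] by linarith
  then show ?thesis by (simp add: algebra_simps)
qed

lemma card_D0_val: "int p * int (card D0) = int (p ^ m) - int p"
  using card_f0 card_D0 by (simp add: algebra_simps)

end


context wrp
begin

lemma Tr_neg: "Tr p m (- y :: 'a) = (p - Tr p m y) mod p"
proof -
  have "(of_nat ((p - Tr p m y) mod p) :: 'a) = of_nat (p - Tr p m y)" by (rule of_nat_mod_p)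
  also have "\<dots> = of_nat p - of_nat (Tr p m y)" using Tr_lt[of y] by (simp add: of_nat_diff)
  also have "\<dots> = T (- y)" using of_nat_p Tr_of_nat T_minus by simp
  finally have "T (- y) = of_nat ((p - Tr p m y) mod p)" by simp
  then show ?thesis using Tr_eq_nat_iff[of "(p - Tr p m y) mod p" "- y"] p1 by simp
qed

lemma z_hh: "z ^ hh \<omega> x = z ^ f x * z ^ Tr p m ((- x) * \<omega>)"
proof -
  have "z ^ hh \<omega> x = z ^ (f x + (p - Tr p m (\<omega> * x)))"
    unfolding hh_def using Tr_lt[of "\<omega> * x"] by (simp add: z_pow_mod)
  also have "\<dots> = z ^ f x * z ^ ((p - Tr p m (\<omega> * x)) mod p)" by (simp add: power_add z_pow_mod)
  also have "(p - Tr p m (\<omega> * x)) mod p = Tr p m ((- x) * \<omega>)"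
    using Tr_neg[of "\<omega> * x"] by (simp add: mult.commute)
  finally show ?thesis .
qed

lemma sum_walsh: "(\<Sum>\<omega>\<in>UNIV. walsh p m f \<omega>) = of_nat (p ^ m)"
proof -
  have "(\<Sum>\<omega>\<in>UNIV. walsh p m f \<omega>) = (\<Sum>\<omega>\<in>UNIV. \<Sum>x\<in>UNIV. z ^ f x * z ^ Tr p m ((- x) * \<omega>))"
    by (simp add: walsh_sum z_hh)
  also have "\<dots> = (\<Sum>x\<in>UNIV. z ^ f x * (\<Sum>\<omega>\<in>UNIV. z ^ Tr p m ((- x) * \<omega>)))"
    by (subst sum.swap) (simp add: sum_distrib_left)
  also have "\<dots> = (\<Sum>x\<in>UNIV. if (x::'a) = 0 then of_nat (p ^ m) else 0)"
  proof (rule sum.cong[OF refl])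
    fix x :: 'a
    show "z ^ f x * (\<Sum>\<omega>\<in>UNIV. z ^ Tr p m ((- x) * \<omega>)) = (if x = 0 then of_nat (p ^ m) else 0)"
    proof (cases "x = 0")
      case True
      then show ?thesis using f0 Tr_zero card_univ_eq by simp
    next
      case False
      then show ?thesis using orth[of "- x"] by simp
    qed
  qed
  also have "\<dots> = of_nat (p ^ m)" by simp
  finally show ?thesis .
qed

lemma sum_S: "of_int CC * (\<Sum>\<omega>\<in>Sf. z ^ gs \<omega>) = of_nat (p ^ m)"
proof -
  have "(\<Sum>\<omega>\<in>UNIV. walsh p m f \<omega>) = (\<Sum>\<omega>\<in>Sf. walsh p m f \<omega>)"
    by (rule sum.mono_neutral_right) (auto simp: walsh_off)
  also have "\<dots> = of_int CC * (\<Sum>\<omega>\<in>Sf. z ^ gs \<omega>)"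
    by (simp add: walsh_on sum_distrib_left)
  finally show ?thesis using sum_walsh by simp
qed

lemma kk_bounds: "s + 4 \<le> m \<Longrightarrow> 1 \<le> s \<Longrightarrow> kk + 2 \<le> m \<and> kk \<ge> 2"
  using mk by linarith

lemma exists_min:
  assumes sm: "s + 4 \<le> m" and s1: "1 \<le> s"
  shows "\<exists>\<omega>\<in>Sf. (eps0 = 1 \<longrightarrow> gs \<omega> = 0) \<and> (eps0 \<noteq> 1 \<longrightarrow> gs \<omega> \<noteq> 0)"
proof (cases "eps0 = 1")
  case True
  show ?thesis
  proof (rule ccontr)
    assume "\<not> ?thesis"
    hence none: "\<forall>\<omega>\<in>Sf. gs \<omega> \<noteq> 0" using True by auto
    have kb: "kk \<le> m" using kk_bounds[OF sm s1] by simp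
    define c :: int where "c = int p ^ (m - kk)"
    have CCv: "CC = int p ^ kk" unfolding CC_def using True by simp
    have "of_int CC * of_int c = (of_nat (p ^ m) :: complex)"
      unfolding CCv c_def using kb by (simp flip: power_add)
    hence "of_int CC * (\<Sum>\<omega>\<in>Sf. z ^ gs \<omega>) = of_int CC * (of_int c * z ^ 0)"
      using sum_S by simp
    moreover have "of_int CC \<noteq> (0::complex)" unfolding CCv using p1 by simp
    ultimately have S: "(\<Sum>\<omega>\<in>Sf. z ^ gs \<omega>) = of_int c * z ^ 0" by simp
    have "int p * int (card {\<omega>\<in>Sf. gs \<omega> = 0}) = int (card Sf) + int p * c - c"
      using dist0[OF _ _ _ S] gs_lt p1 by simp
    moreover have "{\<omega>\<in>Sf. gs \<omega> = 0} = {}" using none by auto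
    ultimately have "0 = int (card Sf) + (int p - 1) * c" by (simp add: algebra_simps)
    moreover have "(int p - 1) * c > 0" unfolding c_def using p1 by simp
    ultimately show False by simp
  qed
next
  case False
  hence em: "eps0 = -1" using eps0_pm by simp
  show ?thesis
  proof (rule ccontr)
    assume "\<not> ?thesis"
    hence all0: "\<forall>\<omega>\<in>Sf. gs \<omega> = 0" using False by auto
    have "(\<Sum>\<omega>\<in>Sf. z ^ gs \<omega>) = of_nat (card Sf)" using all0 by simp
    hence "of_int CC * of_nat (card Sf) = (of_nat (p ^ m) :: complex)" using sum_S by simp
    hence "of_nat (card Sf) * of_int CC = (of_nat (p ^ m) :: complex)" by (simp add: mult.commute)
    hence "int (card Sf) * CC = int (p ^ m)" by (metis of_int_eq_iff of_int_mult of_int_of_nat_eq)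
    moreover have "CC < 0" unfolding CC_def using em p1 by simp
    moreover have "int (p ^ m) > 0" using p1 by simp
    ultimately show False by (metis mult_nonneg_nonpos of_nat_0_le_iff less_le_not_le less_imp_le)
  qed
qed

end


locale wrp2 = wrp +
  assumes sm: "s + 4 \<le> m" and s1: "1 \<le> s"
begin

lemma kb: "kk + 2 \<le> m" "kk \<ge> 2" using kk_bounds[OF sm s1] by auto

definition PP :: int where "PP = int p ^ (m - 2)"
definition QQ :: int where "QQ = int p ^ (kk - 2)"

lemma q_eq: "int (p ^ m) = int p ^ 2 * PP"
proof -
  have "m = 2 + (m - 2)" using kb by simp
  then show ?thesis unfolding PP_def by (metis of_nat_power power_add)
qed

lemma CC_eq2: "CC = eps0 * (int p ^ 2 * QQ)"
proof -
  have "kk = 2 + (kk - 2)" using kb by simp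
  then show ?thesis unfolding QQ_def CC_def by (metis power_add)
qed

lemma PQ: "PP \<ge> int p ^ 2 * QQ"
proof -
  have e: "m - 2 = 2 + (kk - 2) + (m - kk - 2)" using kb by simp
  have "PP = int p ^ 2 * QQ * int p ^ (m - kk - 2)" unfolding PP_def QQ_def by (subst e) (simp only: power_add)
  moreover have "int p ^ (m - kk - 2) \<ge> 1" using p1 by simp
  moreover have "int p ^ 2 * QQ \<ge> 0" unfolding QQ_def by simp
  ultimately show ?thesis by (metis mult_left_mono mult.right_neutral)
qed

lemma QQ_pos: "QQ \<ge> 1" unfolding QQ_def using p1 by simp

definition YY :: "'a \<Rightarrow> int" where
  "YY \<omega> = (if \<omega> \<in> Sf then (if gs \<omega> = 0 then (int p - 1) * eps0 * QQ else - eps0 * QQ) else 0)"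

lemma XX_YY: "XX \<omega> = int p ^ 2 * YY \<omega>"
  unfolding XX_def YY_def CC_eq2 by (simp add: algebra_simps)

lemma wt_val: assumes "\<omega> \<noteq> 0" shows "int (wt \<omega>) = (int p - 1) * (PP - YY \<omega>)"
proof -
  have "int p ^ 2 * int (wt \<omega>) = int p ^ 2 * ((int p - 1) * (PP - YY \<omega>))"
    using wt_formula[OF assms] unfolding q_eq XX_YY by (simp add: algebra_simps)
  moreover have "int p ^ 2 \<noteq> 0" using p1 by simp
  ultimately show ?thesis by simp
qed

definition dmin :: int where
  "dmin = (int p - 1) * (PP - (if eps0 = 1 then int p - 1 else 1) * QQ)"
definition dmax :: int where
  "dmax = (int p - 1) * (PP + (if eps0 = 1 then 1 else int p - 1) * QQ)"

lemma YY_bounds: "- (if eps0 = 1 then 1 else int p - 1) * QQ \<le> YY \<omega> \<and> YY \<omega> \<le> (if eps0 = 1 then int p - 1 else 1) * QQ"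
proof -
  have q1: "QQ \<ge> 1" by (rule QQ_pos)
  have pp: "int p - 1 \<ge> 1" using p1 by simp
  have "1 * QQ \<le> (int p - 1) * QQ" using q1 pp by (intro mult_right_mono) simp_all
  hence a: "(int p - 1) * QQ \<ge> QQ" by simp
  have b: "(1 - int p) * QQ = - ((int p - 1) * QQ)" by (simp add: algebra_simps)
  have a': "- QQ \<le> (int p - 1) * QQ" using a q1 by linarith
  consider "eps0 = 1" | "eps0 = -1" using eps0_pm by blast
  then show ?thesis
  proof cases
    case 1
    have Y1: "YY \<omega> = 0 \<or> YY \<omega> = (int p - 1) * QQ \<or> YY \<omega> = - QQ" unfolding YY_def using 1 by auto
    have "- QQ \<le> YY \<omega> \<and> YY \<omega> \<le> (int p - 1) * QQ"
      using Y1 by (elim disjE) (use a q1 in linarith)+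
    then show ?thesis using 1 by simp
  next
    case 2
    have Y1: "YY \<omega> = 0 \<or> YY \<omega> = - ((int p - 1) * QQ) \<or> YY \<omega> = QQ" unfolding YY_def using 2 by (simp add: algebra_simps)
    have "- ((int p - 1) * QQ) \<le> YY \<omega> \<and> YY \<omega> \<le> QQ"
      using Y1 by (elim disjE) (use a q1 in linarith)+
    then show ?thesis using 2 b by simp
  qed
qed

lemma wt_bounds: assumes "\<omega> \<noteq> 0" shows "dmin \<le> int (wt \<omega>) \<and> int (wt \<omega>) \<le> dmax"
proof -
  have pp: "int p - 1 \<ge> 0" using p1 by simp
  have "PP - (if eps0 = 1 then int p - 1 else 1) * QQ \<le> PP - YY \<omega>"
       "PP - YY \<omega> \<le> PP + (if eps0 = 1 then 1 else int p - 1) * QQ"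
    using YY_bounds[of \<omega>] by linarith+
  then show ?thesis unfolding dmin_def dmax_def wt_val[OF assms]
    using pp by (simp add: mult_left_mono)
qed

lemma dmin_attained: "\<exists>\<omega>. \<omega> \<noteq> 0 \<and> int (wt \<omega>) = dmin"
proof -
  obtain \<omega> where w: "\<omega> \<in> Sf" "eps0 = 1 \<longrightarrow> gs \<omega> = 0" "eps0 \<noteq> 1 \<longrightarrow> gs \<omega> \<noteq> 0"
    using exists_min[OF sm s1] by blast
  have w0: "\<omega> \<noteq> 0" using w(1) zero_notin_S by auto
  have "YY \<omega> = (if eps0 = 1 then int p - 1 else 1) * QQ"
    using w eps0_pm unfolding YY_def by auto
  then show ?thesis using wt_val[OF w0] w0 unfolding dmin_def by auto
qed

lemma AB_ineq: "int p * dmin > (int p - 1) * dmax"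
proof -
  have pp: "int p - 1 > 0" using p1 by simp
  have q1: "QQ \<ge> 1" by (rule QQ_pos)
  have PQ': "PP \<ge> int p ^ 2 * QQ" by (rule PQ)
  show ?thesis
  proof (cases "eps0 = 1")
    case True
    have e: "int p * dmin - (int p - 1) * dmax = (int p - 1) * (PP - (int p ^ 2 - 1) * QQ)"
      unfolding dmin_def dmax_def using True by (simp add: algebra_simps power2_eq_square)
    have "PP - (int p ^ 2 - 1) * QQ \<ge> QQ" using PQ' by (simp add: algebra_simps)
    hence "PP - (int p ^ 2 - 1) * QQ > 0" using q1 by simp
    hence "(int p - 1) * (PP - (int p ^ 2 - 1) * QQ) > 0" using pp by simp
    then show ?thesis using e by simp
  next
    case False
    have e: "int p * dmin - (int p - 1) * dmax = (int p - 1) * (PP - (int p ^ 2 - int p + 1) * QQ)"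
      unfolding dmin_def dmax_def using False by (simp add: algebra_simps power2_eq_square)
    have "(int p ^ 2 - int p + 1) * QQ \<le> (int p ^ 2 - 1) * QQ"
      using q1 p1 by (intro mult_right_mono) auto
    hence "PP - (int p ^ 2 - int p + 1) * QQ \<ge> QQ" using PQ' by (simp add: algebra_simps)
    hence "PP - (int p ^ 2 - int p + 1) * QQ > 0" using q1 by simp
    hence "(int p - 1) * (PP - (int p ^ 2 - int p + 1) * QQ) > 0" using pp by simp
    then show ?thesis using e by simp
  qed
qed

lemma dmin_pos: "dmin > 0"
proof -
  obtain \<omega> where "\<omega> \<noteq> 0" "int (wt \<omega>) = dmin" using dmin_attained by blast
  have "dmax \<ge> dmin" using wt_bounds[OF \<open>\<omega> \<noteq> 0\<close>] \<open>int (wt \<omega>) = dmin\<close> by simp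
  moreover have "int p - 1 \<ge> 0" using p1 by simp
  ultimately have "(int p - 1) * dmin \<le> (int p - 1) * dmax" by (simp add: mult_left_mono)
  hence "int p * dmin > (int p - 1) * dmin" using AB_ineq by linarith
  moreover have "int p * dmin - (int p - 1) * dmin = dmin" by (simp add: algebra_simps)
  ultimately show ?thesis by linarith
qed

end


context wrp2
begin

definition cw :: "'a \<Rightarrow> ('a \<Rightarrow> nat)" where "cw \<omega> = restrict (\<lambda>d. Tr p m (\<omega> * d)) D0"

lemma code_eq: "code_D p m D0 = range cw" unfolding code_D_def cw_def by simp

lemma Tr0_iff: "Tr p m (x::'a) = 0 \<longleftrightarrow> T x = 0"
  using Tr_eq_nat_iff[of 0 x] p1 by simp

lemma T_diff: "T ((a - b) * d) = T (a * d) - T (b * d)"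
proof -
  have "T ((a - b) * d) = T (a * d + - (b * d))" by (rule arg_cong[where f=T]) (simp add: algebra_simps)
  also have "\<dots> = T (a * d) + T (- (b * d))" by (rule T_add)
  also have "\<dots> = T (a * d) - T (b * d)" by (simp add: T_minus)
  finally show ?thesis .
qed

lemma Tr_sub_iff: "Tr p m ((a::'a) * d) = Tr p m (b * d) \<longleftrightarrow> Tr p m ((a - b) * d) = 0"
proof -
  have "Tr p m (a * d) = Tr p m (b * d) \<longleftrightarrow> T (a * d) = T (b * d)" by (rule Tr_eq_iff)
  also have "\<dots> \<longleftrightarrow> T ((a - b) * d) = 0" unfolding T_diff by simp
  also have "\<dots> \<longleftrightarrow> Tr p m ((a - b) * d) = 0" using Tr0_iff by simp
  finally show ?thesis .
qed

lemma hd: "hamming_dist D0 (cw a) (cw b) = wt (a - b)"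
proof -
  have "{d\<in>D0. cw a d \<noteq> cw b d} = {d\<in>D0. Tr p m ((a - b) * d) \<noteq> 0}"
  proof (rule Collect_cong)
    fix d show "(d \<in> D0 \<and> cw a d \<noteq> cw b d) \<longleftrightarrow> (d \<in> D0 \<and> Tr p m ((a - b) * d) \<noteq> 0)"
      unfolding cw_def using Tr_sub_iff[of a d b] by auto
  qed
  then show ?thesis unfolding hamming_dist_def wt_def by simp
qed

lemma wt_pos: "\<omega> \<noteq> 0 \<Longrightarrow> wt \<omega> > 0"
  using wt_bounds dmin_pos by fastforce

lemma cw_inj: "inj cw"
proof (rule injI)
  fix a b assume "cw a = cw b"
  hence "hamming_dist D0 (cw a) (cw b) = 0" unfolding hamming_dist_def by simp
  hence "wt (a - b) = 0" using hd by simp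
  then show "a = b" using wt_pos[of "a - b"] by (cases "a - b = 0") auto
qed

lemma card_code: "card (code_D p m D0) = p ^ m"
  unfolding code_eq using card_image[OF inj_on_subset[OF cw_inj]] card_univ_eq by simp

lemma min_dist: "min_distance D0 (code_D p m D0) = nat dmin"
proof -
  let ?H = "{hamming_dist D0 u v | u v. u \<in> code_D p m D0 \<and> v \<in> code_D p m D0 \<and> u \<noteq> v}"
  have H: "?H = wt ` (UNIV - {0})"
  proof (rule set_eqI, rule iffI)
    fix y assume "y \<in> ?H"
    then obtain a b where ab: "y = hamming_dist D0 (cw a) (cw b)" "cw a \<noteq> cw b"
      unfolding code_eq by blast
    hence "a - b \<noteq> 0" by auto
    then show "y \<in> wt ` (UNIV - {0})" using ab hd by auto
  next
    fix y assume "y \<in> wt ` (UNIV - {0})"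
    then obtain w where w: "w \<noteq> 0" "y = wt w" by auto
    have "cw w \<noteq> cw 0" using w cw_inj by (metis injD)
    moreover have "y = hamming_dist D0 (cw w) (cw 0)" using hd[of w 0] w by simp
    ultimately show "y \<in> ?H" unfolding code_eq by blast
  qed
  have "Min (wt ` (UNIV - {0})) = nat dmin"
  proof (rule Min_eqI)
    show "finite (wt ` (UNIV - {0}))" by simp
    fix y assume "y \<in> wt ` (UNIV - {0})"
    then obtain w where "w \<noteq> 0" "y = wt w" by auto
    then show "nat dmin \<le> y" using wt_bounds by fastforce
  next
    obtain w where "w \<noteq> 0" "int (wt w) = dmin" using dmin_attained by blast
    then show "nat dmin \<in> wt ` (UNIV - {0})" by force
  qed
  then show ?thesis unfolding min_distance_def using H by simp
qed

lemma cw_zero: "cw 0 = restrict (\<lambda>_. 0) D0"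
  unfolding cw_def using Tr_zero by simp

lemma cw_scal: "i < p \<Longrightarrow> cw (of_nat i * a) = restrict (\<lambda>d. (i * cw a d) mod p) D0"
proof -
  assume i: "i < p"
  have "Tr p m (of_nat i * a * d) = (i * Tr p m (a * d)) mod p" for d
  proof -
    have "T (of_nat i * a * d) = of_nat i * T (a * d)"
      using T_PF_mult[OF of_nat_in_PF, of i "a * d"] by (simp add: mult.assoc)
    also have "\<dots> = of_nat ((i * Tr p m (a * d)) mod p)" by (simp add: of_nat_mod_p Tr_of_nat)
    finally show ?thesis using Tr_eq_nat_iff[of "(i * Tr p m (a * d)) mod p"] p1 by simp
  qed
  then show ?thesis unfolding cw_def by (intro ext) simp
qed

lemma per_d:
  assumes sup: "T (b * d) \<noteq> 0 \<longrightarrow> T (a * d) \<noteq> 0"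
  shows "int (card {l\<in>{1..<p}. T ((a - of_nat l * b) * d) \<noteq> 0}) =
         (int p - 1) * (if T (a * d) \<noteq> 0 then 1 else 0) - (if T (b * d) \<noteq> 0 then 1 else 0)"
proof -
  define A where "A = T (a * d)"
  define B where "B = T (b * d)"
  have eqT: "T ((a - of_nat l * b) * d) = A - of_nat l * B" for l
    unfolding A_def B_def using T_diff[of a "of_nat l * b" d] T_PF_mult[OF of_nat_in_PF, of l "b * d"]
    by (simp add: mult.assoc)
  have cnt: "card {1..<p} = p - 1" by simp
  show ?thesis
  proof (cases "A = 0")
    case True
    hence "B = 0" using sup unfolding A_def B_def by auto
    then show ?thesis using True by (simp add: eqT A_def[symmetric] B_def[symmetric])
  next
    case Anz: False
    show ?thesis
    proof (cases "B = 0")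
      case True
      have "{l\<in>{1..<p}. T ((a - of_nat l * b) * d) \<noteq> 0} = {1..<p}" using True Anz by (auto simp: eqT)
      then show ?thesis using True Anz cnt p1 by (simp add: A_def[symmetric] B_def[symmetric] of_nat_diff)
    next
      case Bnz: False
      have rPF: "A * inverse B \<in> PF" unfolding A_def B_def by (intro PF_mult PF_inverse T_in_PF)
      obtain l0 where l0: "l0 < p" "A * inverse B = of_nat l0" using PF_cases[OF rPF] by blast
      have "l0 \<noteq> 0" using l0 Anz Bnz by (metis of_nat_0 mult_eq_0_iff inverse_nonzero_iff_nonzero)
      have iff: "A - of_nat l * B = 0 \<longleftrightarrow> l = l0" if "l < p" for l
      proof -
        have "A - of_nat l * B = 0 \<longleftrightarrow> of_nat l = A * inverse B"
        proof
          assume "A - of_nat l * B = 0"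
          hence "A = of_nat l * B" by simp
          then show "of_nat l = A * inverse B" using Bnz by (simp add: mult.assoc)
        next
          assume "of_nat l = A * inverse B"
          then show "A - of_nat l * B = 0" using Bnz by (simp add: mult.assoc)
        qed
        also have "\<dots> \<longleftrightarrow> l = l0" using l0 of_nat_inj_p[OF that l0(1)] by simp
        finally show ?thesis .
      qed
      have "{l\<in>{1..<p}. T ((a - of_nat l * b) * d) \<noteq> 0} = {1..<p} - {l0}"
      proof (rule set_eqI)
        fix l
        show "l \<in> {l\<in>{1..<p}. T ((a - of_nat l * b) * d) \<noteq> 0} \<longleftrightarrow> l \<in> {1..<p} - {l0}"
        proof (cases "l \<in> {1..<p}")
          case True
          then show ?thesis using iff[of l] by (simp add: eqT)
        next
          case False
          then show ?thesis by auto
        qed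
      qed
      moreover have "l0 \<in> {1..<p}" using l0 \<open>l0 \<noteq> 0\<close> by simp
      ultimately have "card {l\<in>{1..<p}. T ((a - of_nat l * b) * d) \<noteq> 0} = p - 2"
        using cnt by simp
      then show ?thesis using Anz Bnz p1 by (simp add: A_def[symmetric] B_def[symmetric] of_nat_diff)
    qed
  qed
qed

lemma sum_wt:
  assumes sup: "\<forall>d\<in>D0. T (b * d) \<noteq> 0 \<longrightarrow> T (a * d) \<noteq> 0"
  shows "(\<Sum>l\<in>{1..<p}. int (wt (a - of_nat l * b))) = (int p - 1) * int (wt a) - int (wt b)"
proof -
  have wtT: "wt w = card {d\<in>D0. T (w * d) \<noteq> 0}" for w unfolding wt_def using Tr0_iff by simp
  have fD: "finite D0" by simp
  have "(\<Sum>l\<in>{1..<p}. int (wt (a - of_nat l * b))) =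
        (\<Sum>l\<in>{1..<p}. \<Sum>d\<in>D0. if T ((a - of_nat l * b) * d) \<noteq> 0 then 1 else (0::int))"
    unfolding wtT by (simp add: sum.If_cases Int_def)
  also have "\<dots> = (\<Sum>d\<in>D0. \<Sum>l\<in>{1..<p}. if T ((a - of_nat l * b) * d) \<noteq> 0 then 1 else (0::int))"
    by (rule sum.swap)
  also have "\<dots> = (\<Sum>d\<in>D0. int (card {l\<in>{1..<p}. T ((a - of_nat l * b) * d) \<noteq> 0}))"
    by (simp add: sum.If_cases Int_def)
  also have "\<dots> = (\<Sum>d\<in>D0. (int p - 1) * (if T (a * d) \<noteq> 0 then 1 else 0) - (if T (b * d) \<noteq> 0 then 1 else 0))"
    by (rule sum.cong[OF refl]) (use sup per_d in blast)
  also have "\<dots> = (int p - 1) * (\<Sum>d\<in>D0. (if T (a * d) \<noteq> 0 then 1 else 0)) - (\<Sum>d\<in>D0. (if T (b * d) \<noteq> 0 then 1 else 0))"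
    by (simp add: sum_subtractf sum_distrib_left)
  also have "\<dots> = (int p - 1) * int (wt a) - int (wt b)"
    unfolding wtT by (simp add: sum.If_cases Int_def)
  finally show ?thesis .
qed

lemma minimal: "minimal_code p D0 (code_D p m D0)"
  unfolding minimal_code_def
proof (intro ballI impI)
  fix u v assume u: "u \<in> code_D p m D0" and unz: "u \<noteq> restrict (\<lambda>_. 0) D0"
    and v: "v \<in> code_D p m D0" and sup: "cw_supp D0 v \<subseteq> cw_supp D0 u"
  obtain a where a: "u = cw a" using u code_eq by auto
  obtain b where b: "v = cw b" using v code_eq by auto
  have a0: "a \<noteq> 0" using unz a cw_zero by auto
  have supT: "\<forall>d\<in>D0. T (b * d) \<noteq> 0 \<longrightarrow> T (a * d) \<noteq> 0"
  proof (intro ballI impI)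
    fix d assume d: "d \<in> D0" "T (b * d) \<noteq> 0"
    have "Tr p m (b * d) \<noteq> 0" using d(2) Tr0_iff by simp
    hence "d \<in> cw_supp D0 v" unfolding cw_supp_def b cw_def using d(1) by simp
    hence "d \<in> cw_supp D0 u" using sup by blast
    hence "Tr p m (a * d) \<noteq> 0" unfolding cw_supp_def a cw_def using d(1) by simp
    then show "T (a * d) \<noteq> 0" using Tr0_iff by simp
  qed
  show "\<exists>i<p. v = restrict (\<lambda>d. (i * u d) mod p) D0"
  proof (rule ccontr)
    assume no: "\<not> ?thesis"
    have nob: "b \<noteq> of_nat i * a" if "i < p" for i
    proof
      assume "b = of_nat i * a"
      hence "v = restrict (\<lambda>d. (i * u d) mod p) D0" using b a cw_scal[OF that] by simp
      thus False using no that by blast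
    qed
    have b0: "b \<noteq> 0" using nob[of 0] p1 by simp
    have nz: "a - of_nat l * b \<noteq> 0" if l: "l \<in> {1..<p}" for l
    proof
      assume "a - of_nat l * b = 0"
      hence ab: "a = of_nat l * b" by simp
      have lnz: "(of_nat l :: 'a) \<noteq> 0" using l of_nat_ne0 by simp
      have iPF: "inverse (of_nat l :: 'a) \<in> PF" by (intro PF_inverse of_nat_in_PF)
      obtain i where i: "i < p" "inverse (of_nat l :: 'a) = of_nat i" using PF_cases[OF iPF] by blast
      have "b = inverse (of_nat l) * a" using ab lnz by simp
      thus False using nob[OF i(1)] i(2) by simp
    qed
    have lo: "dmin \<le> int (wt (a - of_nat l * b))" if "l \<in> {1..<p}" for l
      using wt_bounds[OF nz[OF that]] by simp
    have "(\<Sum>l\<in>{1..<p}. dmin) \<le> (\<Sum>l\<in>{1..<p}. int (wt (a - of_nat l * b)))"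
      by (rule sum_mono) (rule lo)
    hence "(int p - 1) * dmin \<le> (int p - 1) * int (wt a) - int (wt b)"
      using sum_wt[OF supT] p1 by (simp add: of_nat_diff)
    moreover have "int (wt a) \<le> dmax" using wt_bounds[OF a0] by simp
    moreover have "dmin \<le> int (wt b)" using wt_bounds[OF b0] by simp
    moreover have "(int p - 1) * int (wt a) \<le> (int p - 1) * dmax"
      using \<open>int (wt a) \<le> dmax\<close> p1 by (intro mult_left_mono) auto
    ultimately have "int p * dmin \<le> (int p - 1) * dmax" by (simp add: algebra_simps)
    thus False using AB_ineq by simp
  qed
qed

end


theorem proposition4:
  fixes f :: "'a::{field,finite} \<Rightarrow> nat" and p m s :: nat and \<epsilon> :: int
  assumes "prime p" and "odd p"
    and "CHAR('a) = p" and "CARD('a) = p ^ m"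
    and "m \<ge> 1" and "1 \<le> s" and "s + 4 \<le> m" and "even (m + s)"
    and "WRPB p m s f"
    and "has_sign p m s f \<epsilon>"
  defines "D0 \<equiv> {x::'a. x \<noteq> 0 \<and> f x = 0}"
    and "\<epsilon>0 \<equiv> \<epsilon> * eta0_minus1 p ^ ((m + s) div 2)"
  shows "minimal_code p D0 (code_D p m D0) \<and>
    (if \<epsilon>0 = 1 then
       (\<exists>d. code_params p D0 (code_D p m D0) (p ^ (m - 1) - 1) m d \<and>
            real d = (real p - 1) * (real p ^ (m - 2) - (real p - 1) * sqrt (real p) ^ (m + s - 4)))
     else
       (\<exists>d. code_params p D0 (code_D p m D0) (p ^ (m - 1) - 1) m d \<and>
            real d = (real p - 1) * (real p ^ (m - 2) - sqrt (real p) ^ (m + s - 4))))"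
proof -
  interpret W: wrp2 p m "TYPE('a)" f s \<epsilon>
    by (unfold_locales) (use assms in auto)
  have D0eq: "D0 = W.D0" unfolding D0_def W.D0_def by simp
  have e0: "\<epsilon>0 = W.eps0" unfolding \<epsilon>0_def W.eps0_def W.kk_def by simp
  have p1: "p > 1" using W.p1 .
  have cardD: "card D0 = p ^ (m - 1) - 1"
  proof -
    have "int p * int (card D0) = int (p ^ m) - int p" using W.card_D0_val D0eq by simp
    moreover have "p ^ m = p * p ^ (m - 1)" using assms(5) by (metis One_nat_def Suc_pred' not_one_le_zero not_less power_Suc zero_less_iff_neq_zero)
    ultimately have "int p * int (card D0) = int p * (int (p ^ (m - 1)) - 1)" by (simp add: algebra_simps)
    hence "int (card D0) = int (p ^ (m - 1)) - 1" using p1 by simp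
    thus ?thesis by linarith
  qed
  have sq: "sqrt (real p) ^ (m + s - 4) = real p ^ (W.kk - 2)"
  proof -
    have "m + s - 4 = 2 * (W.kk - 2)" using W.mk W.kb by simp
    hence "sqrt (real p) ^ (m + s - 4) = (sqrt (real p) ^ 2) ^ (W.kk - 2)" by (simp add: power_mult)
    also have "\<dots> = real p ^ (W.kk - 2)" by simp
    finally show ?thesis .
  qed
  have params: "code_params p D0 (code_D p m D0) (p ^ (m - 1) - 1) m (nat W.dmin)"
    unfolding code_params_def using cardD W.card_code W.min_dist D0eq by simp
  have dreal: "real (nat W.dmin) = real_of_int W.dmin" using W.dmin_pos by simp
  have dval: "real_of_int W.dmin = (real p - 1) * (real p ^ (m - 2) - (if W.eps0 = 1 then real p - 1 else 1) * real p ^ (W.kk - 2))"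
    unfolding W.dmin_def W.PP_def W.QQ_def by simp
  show ?thesis
  proof (intro conjI)
    show "minimal_code p D0 (code_D p m D0)" using W.minimal D0eq by simp
    show "if \<epsilon>0 = 1 then
       (\<exists>d. code_params p D0 (code_D p m D0) (p ^ (m - 1) - 1) m d \<and>
            real d = (real p - 1) * (real p ^ (m - 2) - (real p - 1) * sqrt (real p) ^ (m + s - 4)))
     else
       (\<exists>d. code_params p D0 (code_D p m D0) (p ^ (m - 1) - 1) m d \<and>
            real d = (real p - 1) * (real p ^ (m - 2) - sqrt (real p) ^ (m + s - 4)))"
    proof (cases "\<epsilon>0 = 1")
      case True
      then show ?thesis using params dreal dval sq e0 by auto
    next
      case False
      then show ?thesis using params dreal dval sq e0 by auto
    qed
  qed
qed


end
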